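(* Let $n,r\ge3$ and let $X$ be the real algebraic variety of $r$-tuples $\{(L_i,H_i)\}_{i=1,\dots,r}$ of flags in $\mathbb{R}^n$ consisting of a line $L_i$ and a hyperplane $H_i\supset L_i$, with the action of $\mathrm{SL}_{n,\mathbb{R}}$. Let $U(\mathbb{R})$ be the set of real $r$-tuples whose complexification is in general position, and let $\theta\colon U(\mathbb{R})/\mathrm{SL}_n(\mathbb{R})\to\mathbb{P}^{!r-1}(\mathbb{R})$ be the map induced by $x\mapsto[s_{\sigma_1}(x):\dots:s_{\sigma_{!r}}(x)]$, where $\sigma_1,\dots,\sigma_{!r}$ are the derangements of $\{1,\dots,r\}$. Then $\theta$ is injective if $n$ is odd or $n>r$, and $\theta$ is two-to-one if $n\le r$ and $n$ is even.
   Context: For a derangement (fixed-point-free permutation) $\sigma$, $s_\sigma(x)=\prod_{i=1}^r\phi_i(v_{\sigma(i)})$, where $v_i$ generates $L_i$ and $\phi_i$ is a (real) linear form with kernel $H_i$; the point $[s_\sigma(x)]_\sigma$ does not depend on these choices, and $!r$ is the number of derangements. General position (for complex flags in $\mathbb{C}^n$): if $n\ge r$, $\dim(L_1+\dots+L_r)=r$, $\dim(H_1\cap\dots\cap H_r)=n-r$, $L_i\cap H_j=0$ for $i\ne j$, and $(L_1+\dots+L_r)\cap(H_1\cap\dots\cap H_r)=0$; if $n<r$, every sub-$n$-tuple indexed by an $n$-element subset of $\{1,\dots,r\}$ satisfies these conditions. $U(\mathbb{R})/\mathrm{SL}_n(\mathbb{R})$ is the set of $\mathrm{SL}_n(\mathbb{R})$-orbits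 in $U(\mathbb{R})$ (these are closed orbits among real semi-stable points). *)

theory Defs
  imports "HOL-Analysis.Analysis"
begin

text \<open>A point x of X is an r-tuple of flags (L_i, H_i), i = 1..r, in R^n, where
  n = CARD('n). We store it as a pair of functions (L, H) on indices; only the
  indices 1..r are meaningful.\<close>

type_synonym 'n flagtuple = "(nat \<Rightarrow> (real^'n) set) \<times> (nat \<Rightarrow> (real^'n) set)"

definition flag_tuple :: "nat \<Rightarrow> 'n::finite flagtuple \<Rightarrow> bool" where
  "flag_tuple r x \<longleftrightarrow> (\<forall>i\<in>{1..r}.
      subspace (fst x i) \<and> dim (fst x i) = 1 \<and>
      subspace (snd x i) \<and> dim (snd x i) = CARD('n) - 1 \<and>
      fst x i \<subseteq> snd x i)"

definition cvec :: "real^'n \<Rightarrow> complex^'n" where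
  "cvec v = (\<chi> j. complex_of_real (v $ j))"

definition cspan :: "(complex^'n) set \<Rightarrow> (complex^'n) set" where
  "cspan S = {z. \<exists>B c. finite B \<and> B \<subseteq> S \<and> z = (\<Sum>b\<in>B. c b *s b)}"

definition cdim :: "(complex^'n) set \<Rightarrow> nat" where
  "cdim V = (LEAST k. \<exists>B. finite B \<and> card B = k \<and> B \<subseteq> V \<and> cspan B = V)"

definition cx :: "(real^'n) set \<Rightarrow> (complex^'n) set" where
  "cx S = cspan (cvec ` S)"

definition gp_sub :: "'n::finite flagtuple \<Rightarrow> nat set \<Rightarrow> bool" where
  "gp_sub x I \<longleftrightarrow>
     cdim (cspan (\<Union>i\<in>I. cx (fst x i))) = card I \<and>
     cdim (\<Inter>i\<in>I. cx (snd x i)) = CARD('n) - card I \<and>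
     (\<forall>i\<in>I. \<forall>j\<in>I. i \<noteq> j \<longrightarrow> cx (fst x i) \<inter> cx (snd x j) = {0}) \<and>
     cspan (\<Union>i\<in>I. cx (fst x i)) \<inter> (\<Inter>i\<in>I. cx (snd x i)) = {0}"

definition gen_pos :: "nat \<Rightarrow> 'n::finite flagtuple \<Rightarrow> bool" where
  "gen_pos r x \<longleftrightarrow>
     (if CARD('n) \<ge> r then gp_sub x {1..r}
      else (\<forall>S\<subseteq>{1..r}. card S = CARD('n) \<longrightarrow> gp_sub x S))"

definition U :: "nat \<Rightarrow> 'n::finite flagtuple set" where
  "U r = {x. flag_tuple r x \<and> gen_pos r x}"

definition same_orbit :: "nat \<Rightarrow> 'n::finite flagtuple \<Rightarrow> 'n flagtuple \<Rightarrow> bool" where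
  "same_orbit r x y \<longleftrightarrow> (\<exists>g :: real^'n^'n. det g = 1 \<and>
      (\<forall>i\<in>{1..r}. fst y i = (\<lambda>v. g *v v) ` fst x i \<and> snd y i = (\<lambda>v. g *v v) ` snd x i))"

definition derangements :: "nat \<Rightarrow> (nat \<Rightarrow> nat) set" where
  "derangements r = {\<sigma>. \<sigma> permutes {1..r} \<and> (\<forall>i\<in>{1..r}. \<sigma> i \<noteq> i)}"

definition lgen :: "(real^'n) set \<Rightarrow> real^'n" where
  "lgen L = (SOME v. v \<in> L \<and> v \<noteq> 0)"

definition lform :: "(real^'n) set \<Rightarrow> (real^'n \<Rightarrow> real)" where
  "lform H = (SOME f. linear f \<and> {v. f v = 0} = H)"

definition s_coord :: "nat \<Rightarrow> 'n::finite flagtuple \<Rightarrow> (nat \<Rightarrow> nat) \<Rightarrow> real" where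
  "s_coord r x \<sigma> = (\<Prod>i\<in>{1..r}. lform (snd x i) (lgen (fst x (\<sigma> i))))"

text \<open>theta x = theta y in P^{!r-1}(R): the vectors (s_sigma)_sigma are proportional.\<close>

definition theta_eq :: "nat \<Rightarrow> 'n::finite flagtuple \<Rightarrow> 'n flagtuple \<Rightarrow> bool" where
  "theta_eq r x y \<longleftrightarrow> (\<exists>c::real. c \<noteq> 0 \<and>
      (\<forall>\<sigma>\<in>derangements r. s_coord r y \<sigma> = c * s_coord r x \<sigma>))"

end

theory Submission
  imports Defs "HOL-Combinatorics.Cycles"
begin


lemma cspan_eq: "cspan S = vec.span S"
  by (auto simp: cspan_def vec.span_explicit)

lemma cdim_eq:
  assumes "vec.subspace V"
  shows "cdim V = vec.dim V"
proof -
  obtain B where B: "B \<subseteq> V" "vec.independent B" "V \<subseteq> vec.span B" "card B = vec.dim V"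
    using vec.basis_exists by blast
  have fB: "finite B" using B(2) vec.finiteI_independent by blast
  have sB: "vec.span B = V"
    using B assms vec.span_minimal by blast
  show ?thesis unfolding cdim_def
  proof (rule Least_equality)
    show "\<exists>B. finite B \<and> card B = vec.dim V \<and> B \<subseteq> V \<and> cspan B = V"
      using B fB sB cspan_eq by metis
  next
    fix k assume "\<exists>B. finite B \<and> card B = k \<and> B \<subseteq> V \<and> cspan B = V"
    then obtain B' where "finite B'" "card B' = k" "B' \<subseteq> V" "cspan B' = V" by blast
    then show "vec.dim V \<le> k"
      using vec.span_card_ge_dim[of B' V] cspan_eq by auto
  qed
qed

lemma cvec_add: "cvec (u + w) = cvec u + cvec w"
  by (simp add: cvec_def vec_eq_iff)
lemma cvec_scaleR: "cvec (a *\<^sub>R u) = complex_of_real a *s cvec u"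
  by (simp add: cvec_def vec_eq_iff)
lemma cvec_0[simp]: "cvec 0 = 0"
  by (simp add: cvec_def vec_eq_iff)
lemma cvec_inj: "cvec u = cvec w \<longleftrightarrow> u = w"
  by (simp add: cvec_def vec_eq_iff)
lemma cvec_eq_0: "cvec u = 0 \<longleftrightarrow> u = 0"
  using cvec_inj[of u 0] by simp
lemma cvec_diff: "cvec (u - w) = cvec u - cvec w"
  by (simp add: cvec_def vec_eq_iff)

lemma cvec_span:
  assumes "u \<in> span S"
  shows "cvec u \<in> vec.span (cvec ` S)"
proof -
  have "subspace {u. cvec u \<in> vec.span (cvec ` S)}"
    unfolding subspace_def
    by (auto simp: cvec_add cvec_scaleR vec.span_add vec.span_scale vec.span_zero)
  moreover have "S \<subseteq> {u. cvec u \<in> vec.span (cvec ` S)}"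
    by (auto intro: vec.span_base)
  ultimately show ?thesis using assms span_minimal by blast
qed

lemma cx_mem: "u \<in> S \<Longrightarrow> cvec u \<in> cx S"
  unfolding cx_def cspan_eq by (auto intro: vec.span_base)

lemma cx_subspace: "vec.subspace (cx S)"
  unfolding cx_def cspan_eq by simp

lemma line_gen:
  fixes L :: "(real^'n) set"
  assumes "subspace L" "dim L = 1"
  shows "lgen L \<in> L" "lgen L \<noteq> 0" "L = span {lgen L}"
proof -
  have "\<not> L \<subseteq> {0}" using assms dim_eq_0 by (metis zero_neq_one)
  then have ex: "\<exists>v. v \<in> L \<and> v \<noteq> 0" by auto
  show a: "lgen L \<in> L" and b: "lgen L \<noteq> 0"
    using someI_ex[OF ex] unfolding lgen_def by auto
  have "L \<subseteq> span {lgen L}"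
    using card_ge_dim_independent[of "{lgen L}" L] a b assms(2)
    by (simp add: independent_insert)
  moreover have "span {lgen L} \<subseteq> L"
    using a assms(1) span_minimal by blast
  ultimately show "L = span {lgen L}" by blast
qed

lemma line_cx:
  fixes L :: "(real^'n) set"
  assumes "subspace L" "dim L = 1"
  shows "cx L = vec.span {cvec (lgen L)}"
proof -
  have L: "L = span {lgen L}" using line_gen[OF assms] by blast
  have "cvec ` L \<subseteq> vec.span {cvec (lgen L)}"
  proof
    fix y assume "y \<in> cvec ` L"
    then obtain u where "u \<in> L" "y = cvec u" by auto
    then have "u \<in> span {lgen L}" using L by blast
    then show "y \<in> vec.span {cvec (lgen L)}"
      using cvec_span[of u "{lgen L}"] \<open>y = cvec u\<close> by simp
  qed
  then have "cx L \<subseteq> vec.span {cvec (lgen L)}"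
    unfolding cx_def cspan_eq using vec.span_minimal vec.subspace_span by blast
  moreover have "vec.span {cvec (lgen L)} \<subseteq> cx L"
    using cx_mem[OF line_gen(1)[OF assms]] cx_subspace vec.span_minimal by blast
  ultimately show ?thesis by blast
qed


lemma hyperplane_form:
  fixes H :: "(real^'n) set"
  assumes "subspace H" "dim H = CARD('n) - 1"
  shows "linear (lform H)" "{v. lform H v = 0} = H" "H \<noteq> UNIV"
proof -
  have lt: "dim H < DIM(real^'n)" using assms(2) by simp
  obtain a :: "real^'n" where a: "a \<noteq> 0" "\<And>y. y \<in> span H \<Longrightarrow> orthogonal a y"
    using orthogonal_to_subspace_exists[OF lt] by blast
  define K where "K = {v. a \<bullet> v = 0}"
  have lin: "linear (\<lambda>v. a \<bullet> v)"
    by (rule linearI) (auto simp: inner_add_right)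
  have sK: "subspace K" unfolding K_def subspace_def by (auto simp: inner_add_right)
  have HK: "H \<subseteq> K" using a(2) span_base unfolding K_def orthogonal_def by blast
  have "a \<notin> K" using a(1) unfolding K_def by simp
  then have "span K \<noteq> UNIV" using sK span_eq_iff by blast
  then have "dim K \<noteq> DIM(real^'n)" using dim_eq_full by blast
  then have "dim K < DIM(real^'n)" using dim_subset_UNIV[of K] by simp
  then have "dim K \<le> dim H" using assms(2) by simp
  then have "H = K" using subspace_dim_equal[OF assms(1) sK HK] by simp
  then have ex: "\<exists>f::real^'n\<Rightarrow>real. linear f \<and> {v. f v = 0} = H" using lin \<open>H = K\<close> unfolding K_def by blast
  show "linear (lform H)" "{v. lform H v = 0} = H"
    using someI_ex[OF ex] unfolding lform_def by auto
  show "H \<noteq> UNIV" using \<open>H = K\<close> \<open>a \<notin> K\<close> by blast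
qed

lemma prop_forms:
  fixes f h :: "real^'n \<Rightarrow> real"
  assumes "linear f" "linear h" "{v. f v = 0} = {v. h v = 0}" "{v. h v = 0} \<noteq> UNIV"
  shows "\<exists>c. c \<noteq> 0 \<and> (\<forall>v. f v = c * h v)"
proof -
  obtain b where b: "h b \<noteq> 0" using assms(4) by auto
  then have fb: "f b \<noteq> 0" using assms(3) by blast
  have "\<forall>v. f v = (f b / h b) * h v"
  proof
    fix v
    define w where "w = v - (h v / h b) *\<^sub>R b"
    have "h w = h v - (h v / h b) * h b"
      unfolding w_def using linear_diff[OF assms(2)] linear_scale[OF assms(2)] real_scaleR_def by metis
    then have "h w = 0" using b by simp
    then have "f w = 0" using assms(3) by blast
    moreover have "f w = f v - (h v / h b) * f b"
      unfolding w_def using linear_diff[OF assms(1)] linear_scale[OF assms(1)] real_scaleR_def by metis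
    ultimately have "f v = (h v / h b) * f b" by simp
    then show "f v = (f b / h b) * h v" by simp
  qed
  moreover have "f b / h b \<noteq> 0" using fb b by simp
  ultimately show ?thesis by blast
qed



lemma rotate1_map_cycle:
  assumes "distinct cs"
  shows "map (cycle_of_list cs) cs = rotate1 cs"
  using cyclic_rotation[OF assms, of 1] by simp

lemma exists_derangement4:
  fixes a b c d r :: nat
  assumes in_r: "a \<in> {1..r}" "b \<in> {1..r}" "c \<in> {1..r}" "d \<in> {1..r}"
    and dist: "distinct [a,b,c,d]"
  shows "\<exists>\<sigma>\<in>derangements r. \<sigma> a = b \<and> \<sigma> c = d"
proof -
  define R where "R = {1..r} - {a,b,c,d}"
  define rs where "rs = sorted_list_of_set R"
  define cs where "cs = a # b # rs @ [c, d]"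
  have fR: "finite R" unfolding R_def by simp
  have rs: "distinct rs" "set rs = R" using fR unfolding rs_def by auto
  have nR: "a \<notin> set rs" "b \<notin> set rs" "c \<notin> set rs" "d \<notin> set rs"
    using rs(2) unfolding R_def by auto
  have dcs: "distinct cs" unfolding cs_def using rs(1) nR dist by simp
  have "set cs = {a,b,c,d} \<union> R" unfolding cs_def using rs(2) by auto
  also have "\<dots> = {1..r}" unfolding R_def using in_r by blast
  finally have scs: "set cs = {1..r}" .
  define \<sigma> where "\<sigma> = cycle_of_list cs"
  have perm: "\<sigma> permutes {1..r}" unfolding \<sigma>_def using cycle_permutes[of cs] scs by simp
  have mp: "map \<sigma> cs = rotate1 cs" unfolding \<sigma>_def using rotate1_map_cycle[OF dcs] .
  have len: "length cs \<ge> 4" unfolding cs_def by simp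
  have nth: "\<sigma> (cs ! k) = cs ! (Suc k mod length cs)" if "k < length cs" for k
  proof -
    have "\<sigma> (cs ! k) = map \<sigma> cs ! k" using that by simp
    also have "\<dots> = rotate1 cs ! k" using mp by simp
    also have "\<dots> = cs ! (Suc k mod length cs)" using that nth_rotate1 by blast
    finally show ?thesis .
  qed
  have nofix: "\<sigma> x \<noteq> x" if "x \<in> {1..r}" for x
  proof -
    have "x \<in> set cs" using that scs by simp
    then obtain k where k: "k < length cs" "x = cs ! k" by (auto simp: in_set_conv_nth)
    have "Suc k mod length cs \<noteq> k"
    proof (cases "Suc k < length cs")
      case True then have "Suc k mod length cs = Suc k" by (rule mod_less)
      then show ?thesis by simp
    next
      case False then have e: "Suc k = length cs" using k by linarith
      then have "Suc k mod length cs = 0" by simp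
      moreover have "k \<noteq> 0" using e len by linarith
      ultimately show ?thesis by simp
    qed
    moreover have "Suc k mod length cs < length cs" using len by (intro mod_less_divisor) linarith
    ultimately have "cs ! (Suc k mod length cs) \<noteq> cs ! k"
      using dcs k nth_eq_iff_index_eq by blast
    then show ?thesis using nth[OF k(1)] k by simp
  qed
  have "\<sigma> a = b"
  proof -
    have "\<sigma> (cs ! 0) = cs ! (Suc 0 mod length cs)" by (rule nth) (use len in linarith)
    moreover have "Suc 0 mod length cs = 1" using len by simp
    ultimately show ?thesis unfolding cs_def by simp
  qed
  moreover have "\<sigma> c = d"
  proof -
    have l: "length cs = length rs + 4" unfolding cs_def by simp
    have "\<sigma> (cs ! (length rs + 2)) = cs ! (Suc (length rs + 2) mod length cs)"
      by (rule nth) (simp add: l)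
    moreover have "cs ! (length rs + 2) = c" unfolding cs_def by (simp add: nth_append)
    moreover have "Suc (length rs + 2) mod length cs = length rs + 3" unfolding l by simp
    moreover have "cs ! (length rs + 3) = d" unfolding cs_def by (simp add: nth_append)
    ultimately show ?thesis by simp
  qed
  moreover have "\<sigma> \<in> derangements r" unfolding derangements_def using perm nofix by blast
  ultimately show ?thesis by (intro bexI[of _ \<sigma>]) simp_all
qed

lemma derangement_swap:
  assumes "\<sigma> \<in> derangements r" "\<sigma> a = b" "\<sigma> c = d" "distinct [a,b,c,d]"
    "a \<in> {1..r}" "c \<in> {1..r}"
  shows "\<sigma> \<circ> Transposition.transpose a c \<in> derangements r"
proof -
  have p: "\<sigma> permutes {1..r}" "\<forall>i\<in>{1..r}. \<sigma> i \<noteq> i" using assms(1) unfolding derangements_def by auto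
  have "\<sigma> \<circ> Transposition.transpose a c permutes {1..r}"
    using permutes_compose[OF permutes_swap_id[OF assms(5,6)] p(1)] .
  moreover have "\<forall>i\<in>{1..r}. (\<sigma> \<circ> Transposition.transpose a c) i \<noteq> i"
    using p(2) assms(2-4) by (auto simp: Transposition.transpose_def)
  ultimately show ?thesis unfolding derangements_def by blast
qed

lemma prod_split2:
  fixes f :: "nat \<Rightarrow> real"
  assumes "a \<in> S" "c \<in> S" "a \<noteq> c" "finite S"
  shows "(\<Prod>i\<in>S. f i) = f a * f c * (\<Prod>i\<in>S - {a, c}. f i)"
proof -
  have "(\<Prod>i\<in>S. f i) = f a * (\<Prod>i\<in>S - {a}. f i)"
    by (rule prod.remove[OF assms(4,1)])
  moreover have "(\<Prod>i\<in>S - {a}. f i) = f c * (\<Prod>i\<in>S - {a} - {c}. f i)"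
    by (rule prod.remove) (use assms in auto)
  moreover have "S - {a} - {c} = S - {a, c}" by auto
  ultimately show ?thesis by (simp add: mult.assoc)
qed

lemma rel4:
  fixes q :: "nat \<Rightarrow> nat \<Rightarrow> real"
  assumes nz: "\<forall>i\<in>{1..r}. \<forall>j\<in>{1..r}. i \<noteq> j \<longrightarrow> q i j \<noteq> 0"
    and eq: "\<forall>\<sigma>\<in>derangements r. (\<Prod>i\<in>{1..r}. q i (\<sigma> i)) = C"
    and in_r: "a \<in> {1..r}" "b \<in> {1..r}" "c \<in> {1..r}" "d \<in> {1..r}"
    and dist: "distinct [a,b,c,d]"
  shows "q a b * q c d = q a d * q c b"
proof -
  obtain \<sigma> where s: "\<sigma> \<in> derangements r" "\<sigma> a = b" "\<sigma> c = d"
    using exists_derangement4[OF in_r dist] by blast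
  define \<tau> where "\<tau> = \<sigma> \<circ> Transposition.transpose a c"
  have t: "\<tau> \<in> derangements r" unfolding \<tau>_def using derangement_swap[OF s dist in_r(1,3)] .
  have ta: "\<tau> a = d" "\<tau> c = b" unfolding \<tau>_def using s by auto
  have tr: "\<tau> i = \<sigma> i" if "i \<notin> {a,c}" for i unfolding \<tau>_def using that by auto
  have ac: "a \<noteq> c" using dist by simp
  define P where "P = (\<Prod>i\<in>{1..r} - {a, c}. q i (\<sigma> i))"
  have P2: "(\<Prod>i\<in>{1..r} - {a, c}. q i (\<tau> i)) = P" unfolding P_def
    by (rule prod.cong) (auto simp: tr)
  have der: "\<sigma> permutes {1..r}" "\<forall>i\<in>{1..r}. \<sigma> i \<noteq> i" using s(1) unfolding derangements_def by auto
  have "q i (\<sigma> i) \<noteq> 0" if "i \<in> {1..r} - {a, c}" for i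
  proof -
    have i: "i \<in> {1..r}" using that by blast
    have "\<sigma> i \<in> {1..r}" using permutes_in_image[OF der(1)] i by blast
    moreover have "i \<noteq> \<sigma> i" using der(2) i by metis
    ultimately show ?thesis using nz[rule_format, OF i] by blast
  qed
  then have "P \<noteq> 0" unfolding P_def by (subst prod_zero_iff) auto
  have e1: "(\<Prod>i\<in>{1..r}. q i (\<sigma> i)) = C" using eq s(1) by blast
  have e2: "(\<Prod>i\<in>{1..r}. q i (\<tau> i)) = C" using eq t by blast
  have "C = q a b * q c d * P"
    using e1 prod_split2[of a "{1..r}" c "\<lambda>i. q i (\<sigma> i)"] s(2,3) in_r(1,3) ac unfolding P_def by simp
  moreover have "C = q a d * q c b * P"
    using e2 prod_split2[of a "{1..r}" c "\<lambda>i. q i (\<tau> i)"] ta in_r(1,3) ac P2 by simp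
  ultimately show ?thesis using \<open>P \<noteq> 0\<close> by simp
qed



lemma cyc3:
  fixes q :: "nat \<Rightarrow> nat \<Rightarrow> real"
  assumes eq: "\<forall>\<sigma>\<in>derangements 3. (\<Prod>i\<in>{1..3}. q i (\<sigma> i)) = C"
  shows "q 1 2 * q 2 3 * q 3 1 = q 1 3 * q 3 2 * q 2 1"
proof -
  have s123: "set [1::nat,2,3] = {1..3}" "set [1::nat,3,2] = {1..3}" by auto
  define \<sigma> where "\<sigma> = cycle_of_list [1::nat,2,3]"
  define \<tau> where "\<tau> = cycle_of_list [1::nat,3,2]"
  have ms: "map \<sigma> [1,2,3] = [2,3,1]" unfolding \<sigma>_def
    using rotate1_map_cycle[of "[1::nat,2,3]"] by simp
  have mt: "map \<tau> [1,3,2] = [3,2,1]" unfolding \<tau>_def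
    using rotate1_map_cycle[of "[1::nat,3,2]"] by simp
  have sv: "\<sigma> 1 = 2" "\<sigma> 2 = 3" "\<sigma> 3 = 1" using ms by auto
  have tv: "\<tau> 1 = 3" "\<tau> 3 = 2" "\<tau> 2 = 1" using mt by auto
  have "\<sigma> permutes {1..3}" unfolding \<sigma>_def using cycle_permutes[of "[1::nat,2,3]"] s123 by simp
  moreover have "\<forall>i\<in>{1..3}. \<sigma> i \<noteq> i"
  proof
    fix i :: nat assume "i \<in> {1..3}"
    then have "i = 1 \<or> i = 2 \<or> i = 3" by auto
    then show "\<sigma> i \<noteq> i" using sv by auto
  qed
  ultimately have ds: "\<sigma> \<in> derangements 3" unfolding derangements_def by blast
  have "\<tau> permutes {1..3}" unfolding \<tau>_def using cycle_permutes[of "[1::nat,3,2]"] s123 by simp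
  moreover have "\<forall>i\<in>{1..3}. \<tau> i \<noteq> i"
  proof
    fix i :: nat assume "i \<in> {1..3}"
    then have "i = 1 \<or> i = 2 \<or> i = 3" by auto
    then show "\<tau> i \<noteq> i" using tv by auto
  qed
  ultimately have dt: "\<tau> \<in> derangements 3" unfolding derangements_def by blast
  have e: "{1..3::nat} = {1,2,3}" by auto
  have "(\<Prod>i\<in>{1..3}. q i (\<sigma> i)) = C" using eq ds by blast
  then have 1: "q 1 2 * q 2 3 * q 3 1 = C" unfolding e using sv by (simp add: mult.assoc)
  have "(\<Prod>i\<in>{1..3}. q i (\<tau> i)) = C" using eq dt by blast
  then have 2: "q 1 3 * q 2 1 * q 3 2 = C" unfolding e using tv by (simp add: mult.assoc)
  from 1 2 show ?thesis by (simp add: mult_ac)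
qed

lemma derangement_scaling:
  fixes q :: "nat \<Rightarrow> nat \<Rightarrow> real"
  assumes r: "r \<ge> 3"
    and nz: "\<forall>i\<in>{1..r}. \<forall>j\<in>{1..r}. i \<noteq> j \<longrightarrow> q i j \<noteq> 0"
    and eq: "\<forall>\<sigma>\<in>derangements r. (\<Prod>i\<in>{1..r}. q i (\<sigma> i)) = C"
  shows "\<exists>s t. (\<forall>i\<in>{1..r}. s i \<noteq> 0 \<and> t i \<noteq> 0) \<and>
            (\<forall>i\<in>{1..r}. \<forall>j\<in>{1..r}. i \<noteq> j \<longrightarrow> q i j = s i * t j)"
proof -
  define p :: "nat \<Rightarrow> nat" where "p i = (if i = 2 then 3 else 2)" for i
  define s where "s i = (if i = (1::nat) then 1 else q i (p i) / q 1 (p i))" for i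
  define t where "t j = (if j = (1::nat) then q 2 1 / s 2 else q 1 j)" for j
  have NZ: "q i j \<noteq> 0" if "i \<in> {1..r}" "j \<in> {1..r}" "i \<noteq> j" for i j
    using nz that by blast
  have in12: "1 \<in> {1..r}" "2 \<in> {1..r}" "3 \<in> {1..r}" using r by auto
  have p_in: "p i \<in> {1..r}" "p i \<noteq> 1" "p i \<noteq> i" for i unfolding p_def using r by auto
  have s_nz: "s i \<noteq> 0" if "i \<in> {1..r}" for i
  proof (cases "i = 1")
    case True then show ?thesis unfolding s_def by simp
  next
    case False
    have "q i (p i) \<noteq> 0" using NZ[OF that p_in(1)] p_in(3) by metis
    moreover have "q 1 (p i) \<noteq> 0" using NZ[OF in12(1) p_in(1)[of i]] p_in(2)[of i] by metis
    ultimately show ?thesis unfolding s_def using False by simp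
  qed
  have q21: "q 2 1 \<noteq> 0" using NZ[OF in12(2,1)] by simp
  have t_nz: "t j \<noteq> 0" if "j \<in> {1..r}" for j
    unfolding t_def using s_nz[OF in12(2)] q21 NZ[OF in12(1) that] by auto
  have s2: "s 2 = q 2 3 / q 1 3" unfolding s_def p_def by simp
  have rowcol: "q i j = s i * q 1 j"
    if "r \<ge> 4" "i \<in> {1..r}" "j \<in> {1..r}" "i \<noteq> 1" "j \<noteq> 1" "i \<noteq> j" for i j
  proof (cases "j = p i")
    case True
    have "q 1 (p i) \<noteq> 0" using NZ[OF in12(1) p_in(1)[of i]] p_in(2)[of i] by metis
    then show ?thesis unfolding s_def using True that by simp
  next
    case False
    have "q i j * q 1 (p i) = q i (p i) * q 1 j"
      by (rule rel4[OF nz eq]) (use that False p_in[of i] in auto)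
    moreover have "q 1 (p i) \<noteq> 0" using NZ[OF in12(1) p_in(1)[of i]] p_in(2)[of i] by metis
    ultimately show ?thesis unfolding s_def using that by (simp add: field_simps)
  qed
  have main: "q i j = s i * t j" if ij: "i \<in> {1..r}" "j \<in> {1..r}" "i \<noteq> j" for i j
  proof (cases "i = 1")
    case True then show ?thesis unfolding s_def t_def using ij by simp
  next
    case i1: False
    show ?thesis
    proof (cases "j = 1")
      case False
      then have "t j = q 1 j" unfolding t_def by simp
      show ?thesis
      proof (cases "r \<ge> 4")
        case True then show ?thesis using rowcol[OF True ij(1,2) i1 False ij(3)] \<open>t j = q 1 j\<close> by simp
      next
        case r4: False
        then have r3: "r = 3" using r by simp
        have cy: "q 1 2 * q 2 3 * q 3 1 = q 1 3 * q 3 2 * q 2 1" using cyc3[of q C] eq r3 by simp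
        have ij3: "i \<in> {2,3}" "j \<in> {2,3}" using ij r3 i1 False by auto
        have "q 1 3 \<noteq> 0" "q 1 2 \<noteq> 0" using NZ in12 by auto
        then show ?thesis using ij3 ij(3) \<open>t j = q 1 j\<close> unfolding s_def p_def by auto
      qed
    next
      case True
      then have j1: "j = 1" .
      have "q i 1 * s 2 = s i * q 2 1"
      proof (cases "i = 2")
        case True then show ?thesis by simp
      next
        case i2: False
        show ?thesis
        proof (cases "r \<ge> 4")
          case r4: True
          define d where "d = (if i = 3 then 4 else (3::nat))"
          have d: "d \<in> {1..r}" "d \<noteq> 1" "d \<noteq> 2" "d \<noteq> i" unfolding d_def using r4 by auto
          have a1: "q i d = s i * q 1 d" by (rule rowcol[OF r4 ij(1) d(1) i1 d(2)]) (use d in auto)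
          have a2: "q 2 d = s 2 * q 1 d" by (rule rowcol[OF r4 in12(2) d(1)]) (use d in auto)
          have a3: "q i 1 * q 2 d = q i d * q 2 1"
            by (rule rel4[OF nz eq]) (use ij(1) in12 d i1 i2 in auto)
          have "q 1 d \<noteq> 0" using NZ[OF in12(1) d(1)] d by auto
          then show ?thesis using a1 a2 a3 by (simp add: field_simps)
        next
          case False
          then have r3: "r = 3" using r by simp
          then have i3: "i = 3" using ij(1) i1 i2 by auto
          have cy: "q 1 2 * q 2 3 * q 3 1 = q 1 3 * q 3 2 * q 2 1" using cyc3[of q C] eq r3 by simp
          have "q 1 3 \<noteq> 0" "q 1 2 \<noteq> 0" using NZ in12 by auto
          then show ?thesis using cy i3 unfolding s_def p_def by (simp add: field_simps)
        qed
      qed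
      then show ?thesis unfolding t_def using j1 s_nz[OF in12(2)] by (simp add: field_simps)
    qed
  qed
  show ?thesis using s_nz t_nz main by blast
qed



lemma mat_works: "linear f \<Longrightarrow> matrix f *v x = f (x::real^'n)"
  by (simp add: matrix_works linear_def scalar_mult_eq_scaleR)

lemma det_eigenbasis:
  fixes k :: "real^'n \<Rightarrow> real^'n"
  assumes lk: "linear k" and ind: "independent B" and cB: "card B = CARD('n)"
    and eig: "\<forall>b\<in>B. k b = d b *\<^sub>R b"
  shows "det (matrix k) = (\<Prod>b\<in>B. d b)"
proof -
  have fB: "finite B" using ind independent_explicit by blast
  obtain \<beta> where bij: "bij_betw \<beta> (UNIV::'n set) B"
    using finite_same_card_bij[of "UNIV::'n set" B] fB cB by auto
  define R :: "real^'n^'n" where "R = (\<chi> i. \<beta> i)"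
  define M where "M = transpose R"
  have colM: "M *v x = (\<Sum>i\<in>UNIV. x $ i *\<^sub>R \<beta> i)" for x
    unfolding matrix_mult_sum M_def R_def
    by (simp add: column_transpose row_def scalar_mult_eq_scaleR)
  have injM: "inj ((*v) M)"
    unfolding vec.inj_iff_eq_0
  proof (intro allI impI)
    fix x assume "M *v x = 0"
    then have z: "(\<Sum>i\<in>UNIV. x $ i *\<^sub>R \<beta> i) = 0" using colM by simp
    define c where "c b = x $ (inv_into UNIV \<beta> b)" for b
    have "(\<Sum>b\<in>B. c b *\<^sub>R b) = (\<Sum>i\<in>UNIV. c (\<beta> i) *\<^sub>R \<beta> i)"
      using sum.reindex_bij_betw[OF bij, of "\<lambda>b. c b *\<^sub>R b"] by simp
    also have "\<dots> = (\<Sum>i\<in>UNIV. x $ i *\<^sub>R \<beta> i)"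
      unfolding c_def using bij bij_betw_inv_into_left by (intro sum.cong) fastforce+
    finally have "(\<Sum>b\<in>B. c b *\<^sub>R b) = 0" using z by simp
    then have "\<forall>b\<in>B. c b = 0" using ind independent_explicit by blast
    then have "x $ i = 0" for i
      using bij bij_betw_inv_into_left[OF bij] unfolding c_def bij_betw_def
      by (metis UNIV_I imageI)
    then show "x = 0" by (simp add: vec_eq_iff)
  qed
  have dM: "det M \<noteq> 0"
    using det_nz_iff_inj_gen[of "(*v) M"] injM matrix_vector_mul_linear_gen by simp
  have prodM: "matrix k ** M = transpose (\<chi> i. d (\<beta> i) *s \<beta> i)"
  proof -
    have 1: "(matrix k ** M) $ a $ i = (matrix k *v \<beta> i) $ a" for a i
      unfolding M_def R_def
      by (simp add: matrix_matrix_mult_def matrix_vector_mult_def transpose_def)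
    have 2: "(matrix k *v \<beta> i) = d (\<beta> i) *s \<beta> i" for i
      using mat_works[OF lk] eig bij bij_betw_apply scalar_mult_eq_scaleR by (metis UNIV_I)
    show ?thesis using 1 2 by (simp add: vec_eq_iff transpose_def)
  qed
  have "det (matrix k) * det M = (\<Prod>i\<in>UNIV. d (\<beta> i)) * det M"
    using det_mul[of "matrix k" M] prodM det_rows_mul[of "\<lambda>i. d (\<beta> i)" \<beta>]
    unfolding M_def R_def by (simp, metis)
  then have "det (matrix k) = (\<Prod>i\<in>UNIV. d (\<beta> i))" using dM by simp
  also have "\<dots> = (\<Prod>b\<in>B. d b)" using prod.reindex_bij_betw[OF bij] .
  finally show ?thesis .
qed

lemma det_scale_map:
  "det (matrix (\<lambda>v::real^'n. c *\<^sub>R v)) = c ^ CARD('n)"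
proof -
  have "det (matrix (\<lambda>v::real^'n. c *\<^sub>R v)) = (\<Prod>b\<in>(Basis::(real^'n) set). c)"
    by (rule det_eigenbasis) (auto simp: linear_scaleR independent_Basis)
  then show ?thesis by simp
qed



definition vv :: "'n::finite flagtuple \<Rightarrow> nat \<Rightarrow> real^'n" where
  "vv x j = lgen (fst x j)"
definition ff :: "'n::finite flagtuple \<Rightarrow> nat \<Rightarrow> real^'n \<Rightarrow> real" where
  "ff x i = lform (snd x i)"

lemma ft_L:
  assumes "flag_tuple r (x::'n::finite flagtuple)" "j \<in> {1..r}"
  shows "subspace (fst x j)" "dim (fst x j) = 1"
  using assms unfolding flag_tuple_def by auto

lemma ft_H:
  assumes "flag_tuple r (x::'n::finite flagtuple)" "j \<in> {1..r}"
  shows "subspace (snd x j)" "dim (snd x j) = CARD('n) - 1" "fst x j \<subseteq> snd x j"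
  using assms unfolding flag_tuple_def by auto

lemma vv_props:
  assumes "flag_tuple r (x::'n::finite flagtuple)" "j \<in> {1..r}"
  shows "vv x j \<in> fst x j" "vv x j \<noteq> 0" "fst x j = span {vv x j}"
  using line_gen[OF ft_L[OF assms]] unfolding vv_def by auto

lemma ff_props:
  assumes "flag_tuple r (x::'n::finite flagtuple)" "i \<in> {1..r}"
  shows "linear (ff x i)" "{v. ff x i v = 0} = snd x i" "snd x i \<noteq> UNIV"
  using hyperplane_form[OF ft_H(1,2)[OF assms]] unfolding ff_def by auto

lemma ff_zero_iff:
  assumes "flag_tuple r (x::'n::finite flagtuple)" "i \<in> {1..r}"
  shows "ff x i v = 0 \<longleftrightarrow> v \<in> snd x i"
  using ff_props(2)[OF assms] by blast

lemma ff_diag: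
  assumes "flag_tuple r (x::'n::finite flagtuple)" "i \<in> {1..r}"
  shows "ff x i (vv x i) = 0"
  using ff_zero_iff[OF assms] vv_props(1)[OF assms] ft_H(3)[OF assms] by blast

lemma gp_subD:
  assumes "gp_sub (x::'n::finite flagtuple) I"
  shows "cdim (cspan (\<Union>i\<in>I. cx (fst x i))) = card I"
    "cdim (\<Inter>i\<in>I. cx (snd x i)) = CARD('n) - card I"
    "\<And>i j. i \<in> I \<Longrightarrow> j \<in> I \<Longrightarrow> i \<noteq> j \<Longrightarrow> cx (fst x i) \<inter> cx (snd x j) = {0}"
    "cspan (\<Union>i\<in>I. cx (fst x i)) \<inter> (\<Inter>i\<in>I. cx (snd x i)) = {0}"
  using assms unfolding gp_sub_def by (elim conjE; blast)+

lemma cx_span_lines: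
  assumes "flag_tuple r (x::'n::finite flagtuple)" "I \<subseteq> {1..r}"
  shows "cspan (\<Union>i\<in>I. cx (fst x i)) = vec.span (cvec ` vv x ` I)"
proof -
  have cxl: "cx (fst x i) = vec.span {cvec (vv x i)}" if "i \<in> I" for i
    using line_cx[OF ft_L[OF assms(1)]] that assms(2) unfolding vv_def by blast
  have "(\<Union>i\<in>I. cx (fst x i)) \<subseteq> vec.span (cvec ` vv x ` I)"
  proof
    fix y assume "y \<in> (\<Union>i\<in>I. cx (fst x i))"
    then obtain i where i: "i \<in> I" "y \<in> vec.span {cvec (vv x i)}" using cxl by auto
    have "{cvec (vv x i)} \<subseteq> cvec ` vv x ` I" using i by auto
    then show "y \<in> vec.span (cvec ` vv x ` I)" using i vec.span_mono by blast
  qed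
  then have 1: "cspan (\<Union>i\<in>I. cx (fst x i)) \<subseteq> vec.span (cvec ` vv x ` I)"
    unfolding cspan_eq using vec.span_minimal vec.subspace_span by blast
  have "cvec ` vv x ` I \<subseteq> (\<Union>i\<in>I. cx (fst x i))"
    using cxl vec.span_base by fastforce
  then have 2: "vec.span (cvec ` vv x ` I) \<subseteq> cspan (\<Union>i\<in>I. cx (fst x i))"
    unfolding cspan_eq using vec.span_mono by blast
  from 1 2 show ?thesis by blast
qed

lemma gp_independent:
  assumes ft: "flag_tuple r (x::'n::finite flagtuple)" and I: "I \<subseteq> {1..r}" and gp: "gp_sub x I"
  shows "independent (vv x ` I)" "inj_on (vv x) I"
proof -
  have fI: "finite I" using I finite_subset by blast
  define T where "T = vv x ` I"
  have fT: "finite T" unfolding T_def using fI by simp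
  have "cdim (cspan (\<Union>i\<in>I. cx (fst x i))) = card I" using gp_subD(1)[OF gp] .
  then have "cdim (vec.span (cvec ` T)) = card I" using cx_span_lines[OF ft I] unfolding T_def by simp
  then have dimT: "vec.dim (cvec ` T) = card I" using cdim_eq[of "vec.span (cvec ` T)"] by simp
  have cT: "card T \<le> card I" unfolding T_def using card_image_le fI by blast
  have "vec.dim (cvec ` T) \<le> card (cvec ` T)" using vec.dim_le_card' fT by blast
  also have "\<dots> \<le> card T" using card_image_le fT by blast
  finally have cTI: "card T = card I" using dimT cT by simp
  then show "inj_on (vv x) I" unfolding T_def using eq_card_imp_inj_on fI by blast
  show "independent (vv x ` I)"
  proof (rule ccontr)
    assume "\<not> independent (vv x ` I)"
    then obtain a where a: "a \<in> T" "a \<in> span (T - {a})" unfolding T_def dependent_def by blast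
    have "cvec a \<in> vec.span (cvec ` (T - {a}))" using cvec_span[OF a(2)] .
    then have sp: "cvec ` T \<subseteq> vec.span (cvec ` (T - {a}))"
    proof -
      assume ca: "cvec a \<in> vec.span (cvec ` (T - {a}))"
      show ?thesis
      proof
        fix y assume "y \<in> cvec ` T"
        then obtain b where b: "b \<in> T" "y = cvec b" by blast
        show "y \<in> vec.span (cvec ` (T - {a}))"
        proof (cases "b = a")
          case True then show ?thesis using ca b by simp
        next
          case False then have "y \<in> cvec ` (T - {a})" using b by blast
          then show ?thesis by (rule vec.span_base)
        qed
      qed
    qed
    have "vec.dim (cvec ` T) \<le> card (cvec ` (T - {a}))"
      by (rule vec.dim_le_card[OF sp]) (use fT in simp)
    also have "\<dots> \<le> card (T - {a})" by (rule card_image_le) (use fT in simp)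
    also have "\<dots> < card T" by (rule card_Diff1_less[OF fT a(1)])
    finally show False using dimT cTI by simp
  qed
qed

lemma gp_pair:
  assumes ft: "flag_tuple r (x::'n::finite flagtuple)" and I: "I \<subseteq> {1..r}" and gp: "gp_sub x I"
    and ij: "i \<in> I" "j \<in> I" "i \<noteq> j"
  shows "ff x i (vv x j) \<noteq> 0"
proof
  assume "ff x i (vv x j) = 0"
  then have "vv x j \<in> snd x i" using ff_zero_iff[OF ft] ij I by blast
  then have "cvec (vv x j) \<in> cx (snd x i)" by (rule cx_mem)
  moreover have "cvec (vv x j) \<in> cx (fst x j)" using cx_mem vv_props(1)[OF ft] ij I by blast
  moreover have "cx (fst x j) \<inter> cx (snd x i) = {0}" using gp_subD(3)[OF gp ij(2,1)] ij(3) by metis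
  ultimately have "cvec (vv x j) = 0" by blast
  then show False using vv_props(2)[OF ft] ij I cvec_eq_0 by blast
qed

lemma gp_sep:
  assumes ft: "flag_tuple r (x::'n::finite flagtuple)" and I: "I \<subseteq> {1..r}" and gp: "gp_sub x I"
    and cI: "card I = CARD('n)"
    and u: "\<forall>i\<in>I. ff x i u = 0"
  shows "u = 0"
proof -
  have "cdim (\<Inter>i\<in>I. cx (snd x i)) = 0" using gp_subD(2)[OF gp] cI by simp
  moreover have "vec.subspace (\<Inter>i\<in>I. cx (snd x i))"
    by (rule vec.subspace_Inter) (auto simp: cx_subspace)
  ultimately have "vec.dim (\<Inter>i\<in>I. cx (snd x i)) = 0" using cdim_eq by metis
  then have sub: "(\<Inter>i\<in>I. cx (snd x i)) \<subseteq> {0}" using vec.dim_eq_0 by blast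
  have "cvec u \<in> cx (snd x i)" if "i \<in> I" for i
    using cx_mem u ff_zero_iff[OF ft] that I by blast
  then have "cvec u \<in> (\<Inter>i\<in>I. cx (snd x i))" by blast
  then show ?thesis using sub cvec_eq_0 by blast
qed

lemma gp_VW:
  assumes ft: "flag_tuple r (x::'n::finite flagtuple)" and gp: "gp_sub x {1..r}"
    and u: "u \<in> span (vv x ` {1..r})" "\<forall>i\<in>{1..r}. ff x i u = 0"
  shows "u = 0"
proof -
  have "cvec u \<in> cspan (\<Union>i\<in>{1..r}. cx (fst x i))"
    using cvec_span[OF u(1)] cx_span_lines[OF ft, of "{1..r}"] by simp
  moreover have "cvec u \<in> cx (snd x i)" if "i \<in> {1..r}" for i
    using cx_mem u(2) ff_zero_iff[OF ft] that by blast
  ultimately have "cvec u \<in> cspan (\<Union>i\<in>{1..r}. cx (fst x i)) \<inter> (\<Inter>i\<in>{1..r}. cx (snd x i))"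
    by blast
  then have "cvec u = 0" using gp_subD(4)[OF gp] by blast
  then show ?thesis using cvec_eq_0 by blast
qed



lemma U_ft: "x \<in> U r \<Longrightarrow> flag_tuple r x"
  unfolding U_def by blast

lemma U_gp_big: "x \<in> U r \<Longrightarrow> CARD('n) \<ge> r \<Longrightarrow> gp_sub (x::'n::finite flagtuple) {1..r}"
  unfolding U_def gen_pos_def by auto

lemma U_gp_small: "x \<in> U r \<Longrightarrow> \<not> CARD('n) \<ge> r \<Longrightarrow> S \<subseteq> {1..r} \<Longrightarrow> card S = CARD('n)
   \<Longrightarrow> gp_sub (x::'n::finite flagtuple) S"
  unfolding U_def gen_pos_def by auto

lemma U_pair:
  assumes x: "x \<in> U r" and n: "CARD('n) \<ge> 2"
    and ij: "i \<in> {1..r}" "j \<in> {1..r}" "i \<noteq> j"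
  shows "ff (x::'n::finite flagtuple) i (vv x j) \<noteq> 0"
proof (cases "CARD('n) \<ge> r")
  case True
  then show ?thesis using gp_pair[OF U_ft[OF x] _ U_gp_big[OF x True] ij] by simp
next
  case False
  have "CARD('n) - 2 \<le> card ({1..r} - {i,j})" using False ij by auto
  then obtain T where T: "T \<subseteq> {1..r} - {i,j}" "card T = CARD('n) - 2" "finite T"
    by (rule obtain_subset_with_card_n)
  define S where "S = insert i (insert j T)"
  have S: "S \<subseteq> {1..r}" using T ij unfolding S_def by auto
  have "i \<notin> T" "j \<notin> T" using T(1) by auto
  then have "card S = CARD('n)" unfolding S_def using T(2,3) ij(3) n by (simp add: card_insert_if)
  then have "gp_sub x S" using U_gp_small[OF x False S] by simp
  then show ?thesis using gp_pair[OF U_ft[OF x] S] ij unfolding S_def by auto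
qed

lemma U_indep:
  assumes x: "x \<in> U r"
  shows "independent (vv (x::'n::finite flagtuple) ` {1..min CARD('n) r})"
        "inj_on (vv x) {1..min CARD('n) r}"
proof -
  have "\<exists>I. I = {1..min CARD('n) r} \<and> I \<subseteq> {1..r} \<and> gp_sub x I"
  proof (cases "CARD('n) \<ge> r")
    case True then show ?thesis using U_gp_big[OF x] by (simp add: min_absorb2)
  next
    case False
    then have "gp_sub x {1..CARD('n)}" using U_gp_small[OF x False, of "{1..CARD('n)}"] by simp
    then show ?thesis using False by (simp add: min_absorb1)
  qed
  then obtain I where I: "I = {1..min CARD('n) r}" "I \<subseteq> {1..r}" "gp_sub x I" by blast
  show "independent (vv x ` {1..min CARD('n) r})" "inj_on (vv x) {1..min CARD('n) r}"
    using gp_independent[OF U_ft[OF x] I(2,3)] I(1) by auto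
qed

lemma U_sep:
  assumes x: "x \<in> U r" and nr: "CARD('n) \<le> r"
    and u: "\<forall>i\<in>{1..r}. ff (x::'n::finite flagtuple) i u = 0"
  shows "u = 0"
proof (cases "CARD('n) = r")
  case True
  then show ?thesis using gp_sep[OF U_ft[OF x] _ U_gp_big[OF x], of u] u by simp
next
  case False
  then have "gp_sub x {1..CARD('n)}" using U_gp_small[OF x, of "{1..CARD('n)}"] nr by simp
  then show ?thesis using gp_sep[OF U_ft[OF x], of "{1..CARD('n)}"] u nr by auto
qed

lemma U_VW:
  assumes x: "x \<in> U r" and nr: "CARD('n) > r"
    and u: "u \<in> span (vv x ` {1..r})" "\<forall>i\<in>{1..r}. ff (x::'n::finite flagtuple) i u = 0"
  shows "u = 0"
  using gp_VW[OF U_ft[OF x] U_gp_big[OF x] u] nr by simp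

lemma span_scale_sing:
  fixes w :: "real^'n"
  assumes "c \<noteq> 0"
  shows "span {c *\<^sub>R w} = span {w}"
proof
  show "span {c *\<^sub>R w} \<subseteq> span {w}"
    by (rule span_minimal) (auto intro: span_mul span_base)
  have "w = (1/c) *\<^sub>R (c *\<^sub>R w)" using assms by simp
  then have "w \<in> span {c *\<^sub>R w}" by (metis span_mul span_base singletonI)
  then show "span {w} \<subseteq> span {c *\<^sub>R w}" using span_minimal[of "{w}" "span {c *\<^sub>R w}"] by simp
qed

lemma conf_L:
  assumes ftx: "flag_tuple r (x::'n::finite flagtuple)" and ftz: "flag_tuple r (z::'n flagtuple)"
    and lg: "linear g" and j: "j \<in> {1..r}"
    and gv: "g (vv x j) = c *\<^sub>R vv z j" and c: "c \<noteq> 0"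
  shows "g ` fst x j = fst z j"
proof -
  have "g ` fst x j = g ` span {vv x j}" using vv_props(3)[OF ftx j] by simp
  also have "\<dots> = span (g ` {vv x j})" using span_linear_image[OF lg, of "{vv x j}"] by simp
  also have "\<dots> = span {c *\<^sub>R vv z j}" using gv by simp
  also have "\<dots> = span {vv z j}" using span_scale_sing[OF c] .
  also have "\<dots> = fst z j" using vv_props(3)[OF ftz j] by simp
  finally show ?thesis .
qed

lemma conf_H:
  assumes ftx: "flag_tuple r (x::'n::finite flagtuple)" and ftz: "flag_tuple r (z::'n flagtuple)"
    and lg: "linear g" and ig: "inj g" and i: "i \<in> {1..r}"
    and gf: "\<forall>u. ff z i (g u) = c * ff x i u" and c: "c \<noteq> 0"
  shows "g ` snd x i = snd z i"
proof
  show "g ` snd x i \<subseteq> snd z i"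
  proof
    fix y assume "y \<in> g ` snd x i"
    then obtain u where u: "u \<in> snd x i" "y = g u" by blast
    then have "ff x i u = 0" using ff_zero_iff[OF ftx i] by simp
    then have "ff z i (g u) = 0" using gf by simp
    then show "y \<in> snd z i" using u ff_zero_iff[OF ftz i] by simp
  qed
  show "snd z i \<subseteq> g ` snd x i"
  proof
    fix y assume y: "y \<in> snd z i"
    have "surj g" using linear_injective_imp_surjective[OF lg ig] by simp
    then obtain u where u: "y = g u" by blast
    have "ff z i (g u) = 0" using y u ff_zero_iff[OF ftz i] by simp
    then have "ff x i u = 0" using gf c by simp
    then have "u \<in> snd x i" using ff_zero_iff[OF ftx i] by simp
    then show "y \<in> g ` snd x i" using u by blast
  qed
qed



lemma s_coord_eq: "s_coord r x \<sigma> = (\<Prod>i\<in>{1..r}. ff x i (vv x (\<sigma> i)))"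
  unfolding s_coord_def ff_def vv_def by simp

lemma der_facts:
  assumes "\<sigma> \<in> derangements r" "i \<in> {1..r}"
  shows "\<sigma> i \<in> {1..r}" "\<sigma> i \<noteq> i"
proof -
  have p: "\<sigma> permutes {1..r}" "\<forall>i\<in>{1..r}. \<sigma> i \<noteq> i" using assms(1) unfolding derangements_def by auto
  show "\<sigma> i \<in> {1..r}" using permutes_in_image[OF p(1)] assms(2) by blast
  show "\<sigma> i \<noteq> i" using p(2) assms(2) by blast
qed

lemma theta_st:
  assumes x: "x \<in> U r" and z: "z \<in> U r" and r: "r \<ge> 3" and n: "CARD('n) \<ge> 2"
    and th: "theta_eq r (x::'n::finite flagtuple) z"
  shows "\<exists>s t. (\<forall>i\<in>{1..r}. s i \<noteq> 0 \<and> t i \<noteq> 0) \<and>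
     (\<forall>i\<in>{1..r}. \<forall>j\<in>{1..r}. ff z i (vv z j) = s i * ff x i (vv x j) * t j)"
proof -
  obtain c where c: "c \<noteq> 0" "\<forall>\<sigma>\<in>derangements r. s_coord r z \<sigma> = c * s_coord r x \<sigma>"
    using th unfolding theta_eq_def by blast
  define A where "A i j = ff x i (vv x j)" for i j
  define B where "B i j = ff z i (vv z j)" for i j
  define q where "q i j = B i j / A i j" for i j
  have Anz: "A i j \<noteq> 0" if "i \<in> {1..r}" "j \<in> {1..r}" "i \<noteq> j" for i j
    unfolding A_def using U_pair[OF x n that] .
  have Bnz: "B i j \<noteq> 0" if "i \<in> {1..r}" "j \<in> {1..r}" "i \<noteq> j" for i j
    unfolding B_def using U_pair[OF z n that] .
  have qnz: "\<forall>i\<in>{1..r}. \<forall>j\<in>{1..r}. i \<noteq> j \<longrightarrow> q i j \<noteq> 0"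
    unfolding q_def using Anz Bnz by simp
  have qeq: "\<forall>\<sigma>\<in>derangements r. (\<Prod>i\<in>{1..r}. q i (\<sigma> i)) = c"
  proof
    fix \<sigma> assume s: "\<sigma> \<in> derangements r"
    have "A i (\<sigma> i) \<noteq> 0" if i: "i \<in> {1..r}" for i
    proof -
      have "i \<noteq> \<sigma> i" using der_facts(2)[OF s i] by metis
      then show ?thesis using Anz[OF i der_facts(1)[OF s i]] by blast
    qed
    then have "(\<Prod>i\<in>{1..r}. A i (\<sigma> i)) \<noteq> 0" by simp
    moreover have "(\<Prod>i\<in>{1..r}. B i (\<sigma> i)) = c * (\<Prod>i\<in>{1..r}. A i (\<sigma> i))"
      using c(2) s unfolding s_coord_eq A_def B_def by blast
    ultimately show "(\<Prod>i\<in>{1..r}. q i (\<sigma> i)) = c"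
      unfolding q_def by (simp add: prod_dividef)
  qed
  obtain s t where st: "\<forall>i\<in>{1..r}. s i \<noteq> 0 \<and> t i \<noteq> 0"
    "\<forall>i\<in>{1..r}. \<forall>j\<in>{1..r}. i \<noteq> j \<longrightarrow> q i j = s i * t j"
    using derangement_scaling[OF r qnz qeq] by blast
  have "B i j = s i * A i j * t j" if "i \<in> {1..r}" "j \<in> {1..r}" for i j
  proof (cases "i = j")
    case True
    then show ?thesis unfolding A_def B_def
      using ff_diag[OF U_ft[OF x] that(1)] ff_diag[OF U_ft[OF z] that(1)] by simp
  next
    case False
    have "q i j = s i * t j" using st(2) that False by blast
    then show ?thesis unfolding q_def using Anz[OF that False] by (simp add: field_simps)
  qed
  then show ?thesis using st(1) unfolding A_def B_def by blast
qed



lemma linear_cmul_form: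
  fixes f :: "real^'n \<Rightarrow> real"
  assumes "linear f"
  shows "linear (\<lambda>u. c * f u)"
  by (rule linearI) (auto simp: linear_add[OF assms] linear_scale[OF assms] algebra_simps)

lemma ff_linear_0:
  assumes "flag_tuple r (x::'n::finite flagtuple)" "i \<in> {1..r}"
  shows "ff x i 0 = 0"
  using linear_0[OF ff_props(1)[OF assms]] .

lemma ff_scale:
  assumes "flag_tuple r (x::'n::finite flagtuple)" "i \<in> {1..r}"
  shows "ff x i (a *\<^sub>R u) = a * ff x i u"
  using linear_scale[OF ff_props(1)[OF assms]] by simp

lemma ff_diff:
  assumes "flag_tuple r (x::'n::finite flagtuple)" "i \<in> {1..r}"
  shows "ff x i (u - w) = ff x i u - ff x i w"
  using linear_diff[OF ff_props(1)[OF assms]] by simp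

lemma constr_small:
  assumes x: "x \<in> U r" and z: "(z::'n::finite flagtuple) \<in> U r" and nr: "CARD('n) \<le> r"
    and st: "\<forall>i\<in>{1..r}. s i \<noteq> 0 \<and> t i \<noteq> 0"
    and rel: "\<forall>i\<in>{1..r}. \<forall>j\<in>{1..r}. ff z i (vv z j) = s i * ff (x::'n::finite flagtuple) i (vv x j) * t j"
  shows "\<exists>g. linear g \<and> inj g \<and> (\<forall>i\<in>{1..r}. g ` snd x i = snd z i) \<and> (\<forall>j\<in>{1..r}. g ` fst x j = fst z j)"
proof -
  have ftx: "flag_tuple r x" using U_ft[OF x] .
  have ftz: "flag_tuple r z" using U_ft[OF z] .
  define J where "J = {1..CARD('n)}"
  have J: "J = {1..min CARD('n) r}" unfolding J_def using nr by (simp add: min_absorb1)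
  have Jr: "J \<subseteq> {1..r}" unfolding J_def using nr by auto
  have ind: "independent (vv x ` J)" "inj_on (vv x) J" using U_indep[OF x] J by auto
  define F where "F b = (1 / t (inv_into J (vv x) b)) *\<^sub>R vv z (inv_into J (vv x) b)" for b
  obtain g where g: "linear g" "\<forall>b\<in>vv x ` J. g b = F b"
    using linear_independent_extend[OF ind(1)] by blast
  have gvJ: "g (vv x j) = (1 / t j) *\<^sub>R vv z j" if "j \<in> J" for j
    using g(2) that inv_into_f_f[OF ind(2) that] unfolding F_def by auto
  have cJ: "card (vv x ` J) = CARD('n)" using card_image[OF ind(2)] unfolding J_def by simp
  have spn: "UNIV \<subseteq> span (vv x ` J)"
    by (rule card_ge_dim_independent) (use ind(1) cJ in auto)
  have gf: "ff z i (g u) = s i * ff x i u" if i: "i \<in> {1..r}" for i u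
  proof -
    have l1: "linear (\<lambda>u. ff z i (g u))"
      using linear_compose[OF g(1) ff_props(1)[OF ftz i]] by (simp add: o_def)
    have l2: "linear (\<lambda>u. s i * ff x i u)" using linear_cmul_form[OF ff_props(1)[OF ftx i]] .
    show ?thesis
    proof (rule linear_eq_on_span[OF l1 l2])
      show "u \<in> span (vv x ` J)" using spn by blast
    next
      fix b assume "b \<in> vv x ` J"
      then obtain j where j: "j \<in> J" "b = vv x j" by blast
      have jr: "j \<in> {1..r}" using j Jr by blast
      have "ff z i (g b) = (1 / t j) * ff z i (vv z j)"
        using gvJ[OF j(1)] j(2) ff_scale[OF ftz i] by simp
      also have "\<dots> = s i * ff x i b" using rel i jr st j(2) by simp
      finally show "ff z i (g b) = s i * ff x i b" .
    qed
  qed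
  have gv: "g (vv x j) = (1 / t j) *\<^sub>R vv z j" if j: "j \<in> {1..r}" for j
  proof -
    define d where "d = g (vv x j) - (1 / t j) *\<^sub>R vv z j"
    have "ff z i d = 0" if i: "i \<in> {1..r}" for i
    proof -
      have "ff z i d = ff z i (g (vv x j)) - (1 / t j) * ff z i (vv z j)"
        unfolding d_def using ff_diff[OF ftz i] ff_scale[OF ftz i] by simp
      also have "\<dots> = 0" using gf[OF i] rel i j st by simp
      finally show ?thesis .
    qed
    then have "d = 0" using U_sep[OF z nr] by blast
    then show ?thesis unfolding d_def by simp
  qed
  have ig: "inj g"
    unfolding linear_injective_0[OF g(1)]
  proof (intro allI impI)
    fix u assume gu: "g u = 0"
    have "ff x i u = 0" if i: "i \<in> {1..r}" for i
      using gf[OF i, of u] gu ff_linear_0[OF ftz i] st i by simp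
    then show "u = 0" using U_sep[OF x nr] by blast
  qed
  have "\<forall>i\<in>{1..r}. g ` snd x i = snd z i"
    using conf_H[OF ftx ftz g(1) ig] gf st by blast
  moreover have "\<forall>j\<in>{1..r}. g ` fst x j = fst z j"
  proof
    fix j assume j: "j \<in> {1..r}"
    have "1 / t j \<noteq> 0" using st j by simp
    then show "g ` fst x j = fst z j" using conf_L[OF ftx ftz g(1) j gv[OF j]] by blast
  qed
  ultimately show ?thesis using g(1) ig by blast
qed



lemma kernels_subspace:
  assumes ft: "flag_tuple r (x::'n::finite flagtuple)" and K: "K \<subseteq> {1..r}"
  shows "subspace {u. \<forall>i\<in>K. ff x i u = 0}"
proof -
  have lin: "linear (ff x i)" if "i \<in> K" for i using ff_props(1)[OF ft] that K by blast
  show ?thesis unfolding subspace_def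
    using lin by (auto simp: linear_add linear_scale linear_0)
qed

lemma dim_kernels:
  assumes ft: "flag_tuple r (x::'n::finite flagtuple)"
  shows "k \<le> r \<Longrightarrow> dim {u. \<forall>i\<in>{1..k}. ff x i u = 0} + k \<ge> CARD('n)"
proof (induction k)
  case 0
  then show ?case by simp
next
  case (Suc k)
  define W where "W = {u. \<forall>i\<in>{1..k}. ff x i u = 0}"
  define H where "H = snd x (Suc k)"
  have sk: "Suc k \<in> {1..r}" using Suc.prems by simp
  have e: "{1..Suc k} = insert (Suc k) {1..k}" by auto
  have eq: "{u. \<forall>i\<in>{1..Suc k}. ff x i u = 0} = W \<inter> H"
    unfolding W_def H_def e using ff_zero_iff[OF ft sk] by auto
  have sW: "subspace W" unfolding W_def by (rule kernels_subspace[OF ft]) (use Suc.prems in auto)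
  have sH: "subspace H" unfolding H_def using ft_H(1)[OF ft sk] .
  have dH: "dim H = CARD('n) - 1" unfolding H_def using ft_H(2)[OF ft sk] .
  have n1: "CARD('n) \<ge> 1" by simp
  have ds: "dim {a + b |a b. a \<in> W \<and> b \<in> H} + dim (W \<inter> H) = dim W + dim H"
    using dim_sums_Int[OF sW sH] .
  have "dim {a + b |a b. a \<in> W \<and> b \<in> H} \<le> CARD('n)"
    using dim_subset_UNIV[of "{a + b |a b. a \<in> W \<and> b \<in> H}"] by simp
  moreover have "dim W + k \<ge> CARD('n)" using Suc.IH Suc.prems unfolding W_def by simp
  ultimately have "dim (W \<inter> H) + Suc k \<ge> CARD('n)" using ds dH n1 by linarith
  then show ?case using eq by simp
qed

lemma indep_union:
  fixes S T :: "(real^'n) set"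
  assumes iS: "independent S" and iT: "independent T" and ST: "span S \<inter> span T \<subseteq> {0}"
  shows "independent (S \<union> T)" "S \<inter> T = {}"
proof -
  show disj: "S \<inter> T = {}"
  proof (rule ccontr)
    assume "S \<inter> T \<noteq> {}"
    then obtain v where v: "v \<in> S" "v \<in> T" by blast
    then have "v = 0" using ST span_base by blast
    then show False using v(1) iS dependent_zero by blast
  qed
  have fS: "finite S" and fT: "finite T" using iS iT independent_explicit by blast+
  show "independent (S \<union> T)"
    unfolding independent_explicit
  proof (intro conjI allI impI)
    show "finite (S \<union> T)" using fS fT by simp
    fix c :: "real^'n \<Rightarrow> real" assume z: "(\<Sum>v\<in>S \<union> T. c v *\<^sub>R v) = 0"
    have "(\<Sum>v\<in>S \<union> T. c v *\<^sub>R v) = (\<Sum>v\<in>S. c v *\<^sub>R v) + (\<Sum>v\<in>T. c v *\<^sub>R v)"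
      using sum.union_disjoint[OF fS fT disj] .
    then have e: "(\<Sum>v\<in>S. c v *\<^sub>R v) = - (\<Sum>v\<in>T. c v *\<^sub>R v)" using z by (simp add: eq_neg_iff_add_eq_0)
    have "(\<Sum>v\<in>S. c v *\<^sub>R v) \<in> span S" by (simp add: span_base span_scale span_sum)
    moreover have "(\<Sum>v\<in>S. c v *\<^sub>R v) \<in> span T"
      unfolding e by (simp add: span_base span_scale span_sum span_neg)
    ultimately have zS: "(\<Sum>v\<in>S. c v *\<^sub>R v) = 0" using ST by blast
    then have zT: "(\<Sum>v\<in>T. c v *\<^sub>R v) = 0" using e by simp
    have "\<forall>v\<in>S. c v = 0" using iS zS independent_explicit by blast
    moreover have "\<forall>v\<in>T. c v = 0" using iT zT independent_explicit by blast
    ultimately show "\<forall>v\<in>S \<union> T. c v = 0" by blast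
  qed
qed

lemma VW_struct:
  assumes x: "x \<in> U r" and nr: "CARD('n) > r"
  defines "W \<equiv> {u. \<forall>i\<in>{1..r}. ff (x::'n::finite flagtuple) i u = 0}"
  shows "subspace W" "dim W = CARD('n) - r" "independent (vv x ` {1..r})" "inj_on (vv x) {1..r}"
    "span (vv x ` {1..r}) \<inter> W \<subseteq> {0}"
    "dim (span (vv x ` {1..r})) = r"
proof -
  have ft: "flag_tuple r x" using U_ft[OF x] .
  show sW: "subspace W" unfolding W_def by (rule kernels_subspace[OF ft]) auto
  have mn: "min CARD('n) r = r" using nr by simp
  show ind: "independent (vv x ` {1..r})" "inj_on (vv x) {1..r}" using U_indep[OF x] mn by auto
  show VW: "span (vv x ` {1..r}) \<inter> W \<subseteq> {0}" unfolding W_def using U_VW[OF x nr] by blast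
  define V where "V = span (vv x ` {1..r})"
  have sV: "subspace V" unfolding V_def by simp
  show dV: "dim (span (vv x ` {1..r})) = r"
    using dim_span_eq_card_independent[OF ind(1)] card_image[OF ind(2)] by simp
  have d0: "dim (V \<inter> W) = 0" using VW dim_eq_0 unfolding V_def by blast
  have "dim {a + b |a b. a \<in> V \<and> b \<in> W} = r + dim W"
    using dim_sums_Int[OF sV sW] dV d0 unfolding V_def[symmetric] by linarith
  moreover have "dim {a + b |a b. a \<in> V \<and> b \<in> W} \<le> CARD('n)"
    using dim_subset_UNIV[of "{a + b |a b. a \<in> V \<and> b \<in> W}"] by simp
  moreover have "dim W + r \<ge> CARD('n)" using dim_kernels[OF ft, of r] unfolding W_def by simp
  ultimately show "dim W = CARD('n) - r" by linarith
qed

lemma VW_sum: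
  assumes x: "x \<in> U r" and nr: "CARD('n) > r"
  shows "\<forall>u. \<exists>a b. a \<in> span (vv (x::'n::finite flagtuple) ` {1..r}) \<and> (\<forall>i\<in>{1..r}. ff x i b = 0) \<and> u = a + b"
proof -
  define W where "W = {u. \<forall>i\<in>{1..r}. ff x i u = 0}"
  define V where "V = span (vv x ` {1..r})"
  note vw = VW_struct[OF x nr, folded W_def]
  have sV: "subspace V" unfolding V_def by simp
  have d0: "dim (V \<inter> W) = 0" using vw(5) dim_eq_0 unfolding V_def by blast
  have dV: "dim V = r" using vw(6) unfolding V_def .
  have d: "dim {a + b |a b. a \<in> V \<and> b \<in> W} = CARD('n)"
    using dim_sums_Int[OF sV vw(1)] vw(2) dV d0 nr by linarith
  have sS: "subspace {a + b |a b. a \<in> V \<and> b \<in> W}" using subspace_sums[OF sV vw(1)] .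
  have "span {a + b |a b. a \<in> V \<and> b \<in> W} = UNIV"
    using d dim_eq_full[of "{a + b |a b. a \<in> V \<and> b \<in> W}"] by simp
  moreover have "span {a + b |a b. a \<in> V \<and> b \<in> W} = {a + b |a b. a \<in> V \<and> b \<in> W}"
    using span_eq_iff[THEN iffD2, OF sS] .
  ultimately have U: "{a + b |a b. a \<in> V \<and> b \<in> W} = UNIV" by simp
  show ?thesis
  proof
    fix u
    have "u \<in> {a + b |a b. a \<in> V \<and> b \<in> W}" using U by simp
    then obtain a b where ab: "a \<in> V" "b \<in> W" "u = a + b" by blast
    have "\<forall>i\<in>{1..r}. ff x i b = 0" using ab(2) unfolding W_def by simp
    then show "\<exists>a b. a \<in> span (vv x ` {1..r}) \<and> (\<forall>i\<in>{1..r}. ff x i b = 0) \<and> u = a + b"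
      using ab(1,3) unfolding V_def by blast
  qed
qed



lemma constr_big:
  assumes x: "x \<in> U r" and z: "(z::'n::finite flagtuple) \<in> U r" and nr: "CARD('n) > r"
    and st: "\<forall>i\<in>{1..r}. s i \<noteq> 0 \<and> t i \<noteq> 0"
    and rel: "\<forall>i\<in>{1..r}. \<forall>j\<in>{1..r}. ff z i (vv z j) = s i * ff (x::'n::finite flagtuple) i (vv x j) * t j"
  shows "\<exists>g. linear g \<and> inj g \<and> det (matrix g) = 1 \<and>
    (\<forall>i\<in>{1..r}. g ` snd x i = snd z i) \<and> (\<forall>j\<in>{1..r}. g ` fst x j = fst z j)"
proof -
  have ftx: "flag_tuple r x" using U_ft[OF x] .
  have ftz: "flag_tuple r z" using U_ft[OF z] .
  define W where "W = {u. \<forall>i\<in>{1..r}. ff x i u = 0}"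
  define Wz where "Wz = {u. \<forall>i\<in>{1..r}. ff z i u = 0}"
  note vx = VW_struct[OF x nr, folded W_def]
  note vz = VW_struct[OF z nr, folded Wz_def]
  obtain BW where BW: "BW \<subseteq> W" "independent BW" "W \<subseteq> span BW" "card BW = dim W"
    using basis_exists by blast
  obtain BZ where BZ: "BZ \<subseteq> Wz" "independent BZ" "Wz \<subseteq> span BZ" "card BZ = dim Wz"
    using basis_exists by blast
  have dWW: "dim W = dim Wz" using vx(2) vz(2) by simp
  obtain fW where fW: "linear fW" "fW ` BW = BZ" "fW ` W = Wz" "inj_on fW W"
    using basis_to_basis_subspace_isomorphism[OF vx(1) vz(1) dWW BW BZ] by blast
  define BV where "BV = vv x ` {1..r}"
  have spBW: "span BW \<subseteq> W" using BW(1) vx(1) span_minimal by blast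
  have sVW: "span BV \<inter> span BW \<subseteq> {0}" using vx(5) spBW unfolding BV_def by blast
  have iBV: "independent BV" unfolding BV_def using vx(3) .
  note iu = indep_union[OF iBV BW(2) sVW]
  have fBV: "finite BV" unfolding BV_def by simp
  have fBW: "finite BW" using BW(2) independent_explicit by blast
  have cBV: "card BV = r" unfolding BV_def using card_image[OF vx(4)] by simp
  have cB: "card (BV \<union> BW) = CARD('n)"
    using card_Un_disjoint[OF fBV fBW iu(2)] cBV BW(4) vx(2) nr by simp
  have spn: "UNIV \<subseteq> span (BV \<union> BW)"
    by (rule card_ge_dim_independent) (use iu(1) cB in auto)
  define F where "F b = (if b \<in> BW then fW b else
      (1 / t (inv_into {1..r} (vv x) b)) *\<^sub>R vv z (inv_into {1..r} (vv x) b))" for b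
  obtain g where g: "linear g" "\<forall>b\<in>BV \<union> BW. g b = F b"
    using linear_independent_extend[OF iu(1)] by blast
  have gv: "g (vv x j) = (1 / t j) *\<^sub>R vv z j" if j: "j \<in> {1..r}" for j
  proof -
    have "vv x j \<in> BV" unfolding BV_def using j by blast
    moreover then have "vv x j \<notin> BW" using iu(2) by blast
    ultimately show ?thesis using g(2) inv_into_f_f[OF vx(4) j] unfolding F_def by auto
  qed
  have gW: "g u = fW u" if u: "u \<in> W" for u
  proof (rule linear_eq_on_span[OF g(1) fW(1)])
    show "u \<in> span BW" using u BW(3) by blast
  next
    fix b assume "b \<in> BW" then show "g b = fW b" using g(2) unfolding F_def by auto
  qed
  have gf: "ff z i (g u) = s i * ff x i u" if i: "i \<in> {1..r}" for i u
  proof -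
    have l1: "linear (\<lambda>u. ff z i (g u))"
      using linear_compose[OF g(1) ff_props(1)[OF ftz i]] by (simp add: o_def)
    have l2: "linear (\<lambda>u. s i * ff x i u)" using linear_cmul_form[OF ff_props(1)[OF ftx i]] .
    show ?thesis
    proof (rule linear_eq_on_span[OF l1 l2])
      show "u \<in> span (BV \<union> BW)" using spn by blast
    next
      fix b assume b: "b \<in> BV \<union> BW"
      show "ff z i (g b) = s i * ff x i b"
      proof (cases "b \<in> BW")
        case True
        then have bW: "b \<in> W" using BW(1) by blast
        then have "fW b \<in> Wz" using fW(3) by blast
        then have "ff z i (g b) = 0" using gW[OF bW] i unfolding Wz_def by simp
        moreover have "ff x i b = 0" using bW i unfolding W_def by simp
        ultimately show ?thesis by simp
      next
        case False
        then obtain j where j: "j \<in> {1..r}" "b = vv x j" using b unfolding BV_def by blast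
        have "ff z i (g b) = (1 / t j) * ff z i (vv z j)"
          using gv[OF j(1)] j(2) ff_scale[OF ftz i] by simp
        also have "\<dots> = s i * ff x i b" using rel i j st by simp
        finally show ?thesis .
      qed
    qed
  qed
  have ig: "inj g"
    unfolding linear_injective_0[OF g(1)]
  proof (intro allI impI)
    fix u assume gu: "g u = 0"
    have "ff x i u = 0" if i: "i \<in> {1..r}" for i
      using gf[OF i, of u] gu ff_linear_0[OF ftz i] st i by simp
    then have uW: "u \<in> W" unfolding W_def by blast
    have "fW u = fW 0" using gW[OF uW] gu linear_0[OF fW(1)] by simp
    moreover have "0 \<in> W" using vx(1) subspace_0 by blast
    ultimately show "u = 0" using fW(4) uW inj_on_def by metis
  qed
  have dg: "det (matrix g) \<noteq> 0" using det_nz_iff_inj[OF g(1)] ig by simp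
  have "BW \<noteq> {}" using BW(4) vx(2) nr by auto
  then obtain b0 where b0: "b0 \<in> BW" by blast
  define lam where "lam = 1 / det (matrix g)"
  have lam: "lam \<noteq> 0" unfolding lam_def using dg by simp
  define Kf where "Kf b = (if b = b0 then lam *\<^sub>R b else b)" for b
  obtain k where k: "linear k" "\<forall>b\<in>BV \<union> BW. k b = Kf b"
    using linear_independent_extend[OF iu(1)] by blast
  define d where "d b = (if b = b0 then lam else 1)" for b
  have "det (matrix k) = (\<Prod>b\<in>BV \<union> BW. d b)"
    by (rule det_eigenbasis[OF k(1) iu(1) cB]) (use k(2) in \<open>auto simp: Kf_def d_def\<close>)
  also have "\<dots> = lam" unfolding d_def using prod.delta[of "BV \<union> BW" b0 "\<lambda>_. lam"] fBV fBW b0 by simp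
  finally have dk: "det (matrix k) = lam" .
  have ik: "inj k" using det_nz_iff_inj[OF k(1)] dk lam by simp
  have fk: "ff x i (k u) = ff x i u" if i: "i \<in> {1..r}" for i u
  proof -
    have l1: "linear (\<lambda>u. ff x i (k u))"
      using linear_compose[OF k(1) ff_props(1)[OF ftx i]] by (simp add: o_def)
    show ?thesis
    proof (rule linear_eq_on_span[OF l1 ff_props(1)[OF ftx i]])
      show "u \<in> span (BV \<union> BW)" using spn by blast
    next
      fix b assume b: "b \<in> BV \<union> BW"
      show "ff x i (k b) = ff x i b"
      proof (cases "b = b0")
        case True
        have "b0 \<in> W" using b0 BW(1) by blast
        then have "ff x i b0 = 0" using i unfolding W_def by simp
        then show ?thesis using True k(2) b ff_scale[OF ftx i] unfolding Kf_def by simp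
      next
        case False then show ?thesis using k(2) b unfolding Kf_def by simp
      qed
    qed
  qed
  have kv: "k (vv x j) = vv x j" if j: "j \<in> {1..r}" for j
  proof -
    have "vv x j \<in> BV" unfolding BV_def using j by blast
    moreover then have "vv x j \<noteq> b0" using iu(2) b0 by blast
    ultimately show ?thesis using k(2) unfolding Kf_def by simp
  qed
  define h where "h = g \<circ> k"
  have lh: "linear h" unfolding h_def using linear_compose[OF k(1) g(1)] .
  have ih: "inj h" unfolding h_def using inj_compose[OF ig ik] .
  have dh: "det (matrix h) = 1"
    unfolding h_def matrix_compose[OF k(1) g(1)] det_mul dk lam_def using dg by simp
  have hf: "\<forall>u. ff z i (h u) = s i * ff x i u" if i: "i \<in> {1..r}" for i
    unfolding h_def using gf[OF i] fk[OF i] by simp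
  have hv: "h (vv x j) = (1 / t j) *\<^sub>R vv z j" if j: "j \<in> {1..r}" for j
    unfolding h_def using kv[OF j] gv[OF j] by simp
  have "\<forall>i\<in>{1..r}. h ` snd x i = snd z i"
    using conf_H[OF ftx ftz lh ih] hf st by blast
  moreover have "\<forall>j\<in>{1..r}. h ` fst x j = fst z j"
  proof
    fix j assume j: "j \<in> {1..r}"
    have "1 / t j \<noteq> 0" using st j by simp
    then show "h ` fst x j = fst z j" using conf_L[OF ftx ftz lh j hv[OF j]] by blast
  qed
  ultimately show ?thesis using lh ih dh by blast
qed



definition cmat :: "real^'n^'m \<Rightarrow> complex^'n^'m" where
  "cmat A = (\<chi> i j. complex_of_real (A$i$j))"

lemma cmat_cvec: "cmat A *v cvec u = cvec (A *v u)"
  by (simp add: vec_eq_iff cmat_def cvec_def matrix_vector_mult_def)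

lemma cmat_mult: "cmat (A ** B) = cmat A ** cmat B"
  by (simp add: vec_eq_iff cmat_def matrix_matrix_mult_def)

lemma cmat_1: "cmat (mat 1 :: real^'n^'n) = mat 1"
  by (simp add: vec_eq_iff cmat_def mat_def)

definition actf :: "(real^'n \<Rightarrow> real^'n) \<Rightarrow> 'n::finite flagtuple \<Rightarrow> 'n flagtuple" where
  "actf f x = ((\<lambda>i. f ` fst x i), (\<lambda>i. f ` snd x i))"

lemma actf_simps[simp]: "fst (actf f x) i = f ` fst x i" "snd (actf f x) i = f ` snd x i"
  unfolding actf_def by auto

lemma cmat_inj:
  fixes f :: "real^'n \<Rightarrow> real^'n"
  assumes lf: "linear f" and inf: "inj f"
  shows "inj ((*v) (cmat (matrix f)))"
proof -
  obtain g where g: "linear g" "g \<circ> f = id" using linear_injective_left_inverse[OF lf inf] by blast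
  have "matrix g ** matrix f = mat 1"
    using matrix_compose[OF lf g(1)] g(2) by (simp add: matrix_id_mat_1)
  then have m1: "cmat (matrix g) ** cmat (matrix f) = mat 1" using cmat_mult cmat_1 by metis
  show ?thesis
  proof (rule injI)
    fix a b assume "cmat (matrix f) *v a = cmat (matrix f) *v b"
    then have "cmat (matrix g) *v (cmat (matrix f) *v a) = cmat (matrix g) *v (cmat (matrix f) *v b)" by simp
    then show "a = b" by (simp add: matrix_vector_mul_assoc m1)
  qed
qed

lemma cx_image:
  fixes f :: "real^'n \<Rightarrow> real^'n"
  assumes lf: "linear f"
  shows "cx (f ` S) = (*v) (cmat (matrix f)) ` cx S"
proof -
  have e: "cvec (f u) = cmat (matrix f) *v cvec u" for u
    using cmat_cvec[of "matrix f" u] mat_works[OF lf, of u] by simp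
  have "cvec ` f ` S = (*v) (cmat (matrix f)) ` cvec ` S"
    unfolding image_image e ..
  then show ?thesis unfolding cx_def cspan_eq by (simp add: vec.span_image)
qed

lemma cdim_image:
  fixes V :: "(complex^'n) set"
  assumes "vec.subspace V" "inj ((*v) (F::complex^'n^'n))"
  shows "cdim ((*v) F ` V) = cdim V"
proof -
  have "cdim ((*v) F ` V) = vec.dim ((*v) F ` V)"
    using cdim_eq vec.subspace_image[OF assms(1)] by blast
  also have "\<dots> = vec.dim V"
    by (rule vec.dim_image_eq) (use assms(2) matrix_vector_mul_linear_gen in \<open>auto intro: inj_on_subset\<close>)
  also have "\<dots> = cdim V" using cdim_eq[OF assms(1)] by simp
  finally show ?thesis .
qed

lemma gp_sub_transport:
  fixes f :: "real^'n \<Rightarrow> real^'n"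
  assumes lf: "linear f" and inf: "inj f" and gp: "gp_sub (x::'n::finite flagtuple) I" and I: "I \<noteq> {}"
  shows "gp_sub (actf f x) I"
proof -
  define F where "F = cmat (matrix f)"
  have iF: "inj ((*v) F)" unfolding F_def using cmat_inj[OF lf inf] .
  have cxF: "cx (f ` S) = (*v) F ` cx S" for S unfolding F_def using cx_image[OF lf] .
  have spU: "cspan (\<Union>i\<in>I. cx (f ` fst x i)) = (*v) F ` cspan (\<Union>i\<in>I. cx (fst x i))"
    unfolding cxF cspan_eq image_UN[symmetric] by (simp add: vec.span_image)
  have subs1: "vec.subspace (cspan (\<Union>i\<in>I. cx (fst x i)))" unfolding cspan_eq by simp
  have intU: "(\<Inter>i\<in>I. cx (f ` snd x i)) = (*v) F ` (\<Inter>i\<in>I. cx (snd x i))"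
    unfolding cxF using image_INT[of "(*v) F" UNIV I "\<lambda>i. cx (snd x i)"] iF I by auto
  have subs2: "vec.subspace (\<Inter>i\<in>I. cx (snd x i))"
    by (rule vec.subspace_Inter) (auto simp: cx_subspace)
  have F0: "(*v) F ` {0} = {0}" by simp
  have g: "cdim (cspan (\<Union>i\<in>I. cx (fst x i))) = card I"
    "cdim (\<Inter>i\<in>I. cx (snd x i)) = CARD('n) - card I"
    "\<And>i j. i \<in> I \<Longrightarrow> j \<in> I \<Longrightarrow> i \<noteq> j \<Longrightarrow> cx (fst x i) \<inter> cx (snd x j) = {0}"
    "cspan (\<Union>i\<in>I. cx (fst x i)) \<inter> (\<Inter>i\<in>I. cx (snd x i)) = {0}"
    using gp_subD[OF gp] by auto
  have "cdim (cspan (\<Union>i\<in>I. cx (fst (actf f x) i))) = card I"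
    using spU cdim_image[OF subs1 iF] g(1) by simp
  moreover have "cdim (\<Inter>i\<in>I. cx (snd (actf f x) i)) = CARD('n) - card I"
    using intU cdim_image[OF subs2 iF] g(2) by simp
  moreover have "\<forall>i\<in>I. \<forall>j\<in>I. i \<noteq> j \<longrightarrow> cx (fst (actf f x) i) \<inter> cx (snd (actf f x) j) = {0}"
  proof (intro ballI impI)
    fix i j assume "i \<in> I" "j \<in> I" "i \<noteq> j"
    then have "cx (fst x i) \<inter> cx (snd x j) = {0}" using g(3) by blast
    then show "cx (fst (actf f x) i) \<inter> cx (snd (actf f x) j) = {0}"
      unfolding actf_simps cxF image_Int[OF iF, symmetric] by simp
  qed
  moreover have "cspan (\<Union>i\<in>I. cx (fst (actf f x) i)) \<inter> (\<Inter>i\<in>I. cx (snd (actf f x) i)) = {0}"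
    unfolding actf_simps spU intU image_Int[OF iF, symmetric] g(4) by simp
  ultimately show ?thesis unfolding gp_sub_def by blast
qed

lemma flag_tuple_transport:
  fixes f :: "real^'n \<Rightarrow> real^'n"
  assumes lf: "linear f" and inf: "inj f" and ft: "flag_tuple r (x::'n::finite flagtuple)"
  shows "flag_tuple r (actf f x)"
  unfolding flag_tuple_def actf_simps
proof
  fix i assume i: "i \<in> {1..r}"
  have iS: "inj_on f (span S)" for S using inf by (simp add: inj_on_def inj_def)
  show "subspace (f ` fst x i) \<and> dim (f ` fst x i) = 1 \<and> subspace (f ` snd x i) \<and>
      dim (f ` snd x i) = CARD('n) - 1 \<and> f ` fst x i \<subseteq> f ` snd x i"
    using ft_L[OF ft i] ft_H[OF ft i] linear_subspace_image[OF lf] dim_image_eq[OF lf iS] by auto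
qed

lemma U_transport:
  fixes f :: "real^'n \<Rightarrow> real^'n"
  assumes lf: "linear f" and inf: "inj f" and x: "(x::'n::finite flagtuple) \<in> U r"
    and n: "CARD('n) \<ge> 1" and r: "r \<ge> 1"
  shows "actf f x \<in> U r"
proof -
  have ft: "flag_tuple r (actf f x)" using flag_tuple_transport[OF lf inf U_ft[OF x]] .
  have "gen_pos r (actf f x)"
  proof (cases "CARD('n) \<ge> r")
    case True
    then show ?thesis unfolding gen_pos_def
      using gp_sub_transport[OF lf inf U_gp_big[OF x True]] r by simp
  next
    case False
    have "gp_sub (actf f x) S" if "S \<subseteq> {1..r}" "card S = CARD('n)" for S
    proof -
      have "S \<noteq> {}" using that n by auto
      then show ?thesis using gp_sub_transport[OF lf inf U_gp_small[OF x False that]] by simp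
    qed
    then show ?thesis unfolding gen_pos_def using False by simp
  qed
  then show ?thesis using ft unfolding U_def by blast
qed



lemma theta_transport:
  fixes f :: "real^'n \<Rightarrow> real^'n"
  assumes lf: "linear f" and inf: "inj f" and ft: "flag_tuple r (x::'n::finite flagtuple)"
  shows "theta_eq r x (actf f x)"
proof -
  define y where "y = actf f x"
  have fty: "flag_tuple r y" unfolding y_def using flag_tuple_transport[OF lf inf ft] .
  have "\<forall>j\<in>{1..r}. \<exists>l. l \<noteq> 0 \<and> vv y j = l *\<^sub>R f (vv x j)"
  proof
    fix j assume j: "j \<in> {1..r}"
    have "vv y j \<in> fst y j" using vv_props(1)[OF fty j] .
    also have "fst y j = f ` span {vv x j}" unfolding y_def using vv_props(3)[OF ft j] by simp
    also have "\<dots> = span {f (vv x j)}" using span_linear_image[OF lf, of "{vv x j}"] by simp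
    finally obtain l where l: "vv y j = l *\<^sub>R f (vv x j)" by (auto simp: span_singleton)
    then have "l \<noteq> 0" using vv_props(2)[OF fty j] by auto
    then show "\<exists>l. l \<noteq> 0 \<and> vv y j = l *\<^sub>R f (vv x j)" using l by blast
  qed
  then obtain lam where lam: "\<forall>j\<in>{1..r}. lam j \<noteq> 0 \<and> vv y j = lam j *\<^sub>R f (vv x j)"
    by metis
  have "\<forall>i\<in>{1..r}. \<exists>m. m \<noteq> 0 \<and> (\<forall>u. ff y i (f u) = m * ff x i u)"
  proof
    fix i assume i: "i \<in> {1..r}"
    have l1: "linear (\<lambda>u. ff y i (f u))"
      using linear_compose[OF lf ff_props(1)[OF fty i]] by (simp add: o_def)
    have "{u. ff y i (f u) = 0} = {u. ff x i u = 0}"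
    proof -
      have "ff y i (f u) = 0 \<longleftrightarrow> f u \<in> f ` snd x i" for u
        using ff_zero_iff[OF fty i] unfolding y_def by simp
      also have "f u \<in> f ` snd x i \<longleftrightarrow> u \<in> snd x i" for u using inf by (auto simp: inj_def)
      finally show ?thesis using ff_zero_iff[OF ft i] by auto
    qed
    moreover have "{u. ff x i u = 0} \<noteq> UNIV" using ff_props(2,3)[OF ft i] by simp
    ultimately show "\<exists>m. m \<noteq> 0 \<and> (\<forall>u. ff y i (f u) = m * ff x i u)"
      using prop_forms[OF l1 ff_props(1)[OF ft i]] by blast
  qed
  then obtain mu where mu: "\<forall>i\<in>{1..r}. mu i \<noteq> 0 \<and> (\<forall>u. ff y i (f u) = mu i * ff x i u)"
    by metis
  define c where "c = (\<Prod>j\<in>{1..r}. lam j) * (\<Prod>i\<in>{1..r}. mu i)"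
  have c0: "c \<noteq> 0" unfolding c_def using lam mu by simp
  have "s_coord r y \<sigma> = c * s_coord r x \<sigma>" if s: "\<sigma> \<in> derangements r" for \<sigma>
  proof -
    have p: "\<sigma> permutes {1..r}" using s unfolding derangements_def by blast
    have "ff y i (vv y (\<sigma> i)) = lam (\<sigma> i) * (mu i * ff x i (vv x (\<sigma> i)))" if i: "i \<in> {1..r}" for i
    proof -
      have si: "\<sigma> i \<in> {1..r}" using der_facts(1)[OF s i] .
      have "ff y i (vv y (\<sigma> i)) = ff y i (f (lam (\<sigma> i) *\<^sub>R vv x (\<sigma> i)))"
        using lam si linear_scale[OF lf] by simp
      also have "\<dots> = mu i * ff x i (lam (\<sigma> i) *\<^sub>R vv x (\<sigma> i))" using mu i by blast
      also have "\<dots> = lam (\<sigma> i) * (mu i * ff x i (vv x (\<sigma> i)))"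
        using ff_scale[OF ft i] by simp
      finally show ?thesis .
    qed
    then have "s_coord r y \<sigma> = (\<Prod>i\<in>{1..r}. lam (\<sigma> i) * (mu i * ff x i (vv x (\<sigma> i))))"
      unfolding s_coord_eq by (rule prod.cong[OF refl])
    also have "\<dots> = (\<Prod>i\<in>{1..r}. lam (\<sigma> i)) * ((\<Prod>i\<in>{1..r}. mu i) * s_coord r x \<sigma>)"
      unfolding s_coord_eq prod.distrib ..
    also have "(\<Prod>i\<in>{1..r}. lam (\<sigma> i)) = (\<Prod>j\<in>{1..r}. lam j)"
      using prod.permute[OF p, of lam] by (simp add: o_def)
    finally show ?thesis unfolding c_def by simp
  qed
  then show ?thesis unfolding theta_eq_def y_def using c0 by blast
qed

lemma stab_scalar:
  fixes k :: "real^'n \<Rightarrow> real^'n"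
  assumes x: "(x::'n::finite flagtuple) \<in> U r" and r: "r \<ge> 3" and nr: "CARD('n) \<le> r" and n: "CARD('n) \<ge> 2"
    and lk: "linear k"
    and sL: "\<forall>j\<in>{1..r}. k ` fst x j = fst x j"
    and sH: "\<forall>i\<in>{1..r}. k ` snd x i = snd x i"
  shows "\<exists>\<mu>. \<forall>u. k u = \<mu> *\<^sub>R u"
proof -
  have ft: "flag_tuple r x" using U_ft[OF x] .
  have "\<forall>j\<in>{1..r}. \<exists>m. k (vv x j) = m *\<^sub>R vv x j"
  proof
    fix j assume j: "j \<in> {1..r}"
    have "k (vv x j) \<in> fst x j" using sL j vv_props(1)[OF ft j] by blast
    then show "\<exists>m. k (vv x j) = m *\<^sub>R vv x j" using vv_props(3)[OF ft j] by (auto simp: span_singleton)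
  qed
  then obtain m where m: "\<forall>j\<in>{1..r}. k (vv x j) = m j *\<^sub>R vv x j" by metis
  have meq: "m j = m j'" if j: "j \<in> {1..r}" "j' \<in> {1..r}" for j j'
  proof (cases "j = j'")
    case True then show ?thesis by simp
  next
    case False
    have "card ({1..r} - {j, j'}) \<ge> 1" using r j False by (simp add: card_Diff_subset)
    then obtain i where i: "i \<in> {1..r}" "i \<noteq> j" "i \<noteq> j'"
      by (metis Diff_iff card_0_eq finite_Diff finite_atLeastAtMost insertCI ex_in_conv not_one_le_zero)
    define a where "a = ff x i (vv x j')"
    define b where "b = ff x i (vv x j)"
    have a0: "a \<noteq> 0" unfolding a_def using U_pair[OF x n i(1) j(2) i(3)] .
    have b0: "b \<noteq> 0" unfolding b_def using U_pair[OF x n i(1) j(1) i(2)] .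
    define w where "w = a *\<^sub>R vv x j - b *\<^sub>R vv x j'"
    have "ff x i w = a * b - b * a" unfolding w_def a_def b_def
      using ff_diff[OF ft i(1)] ff_scale[OF ft i(1)] by simp
    then have "w \<in> snd x i" using ff_zero_iff[OF ft i(1)] by simp
    then have "k w \<in> snd x i" using sH i(1) by blast
    then have "ff x i (k w) = 0" using ff_zero_iff[OF ft i(1)] by simp
    moreover have "k w = (a * m j) *\<^sub>R vv x j - (b * m j') *\<^sub>R vv x j'"
      unfolding w_def using linear_diff[OF lk] linear_scale[OF lk] m j by simp
    ultimately have "(a * m j) * b - (b * m j') * a = 0"
      using ff_diff[OF ft i(1)] ff_scale[OF ft i(1)] unfolding a_def b_def by simp
    then have "a * b * (m j - m j') = 0" by (simp add: algebra_simps)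
    then show ?thesis using a0 b0 by simp
  qed
  define J where "J = {1..CARD('n)}"
  have J: "J = {1..min CARD('n) r}" unfolding J_def using nr by (simp add: min_absorb1)
  have ind: "independent (vv x ` J)" "inj_on (vv x) J" using U_indep[OF x] J by auto
  have cJ: "card (vv x ` J) = CARD('n)" using card_image[OF ind(2)] unfolding J_def by simp
  have spn: "UNIV \<subseteq> span (vv x ` J)"
    by (rule card_ge_dim_independent) (use ind(1) cJ in auto)
  have 1: "1 \<in> {1..r}" using r by simp
  have "k u = m 1 *\<^sub>R u" for u
  proof (rule linear_eq_on_span[OF lk linear_scaleR])
    show "u \<in> span (vv x ` J)" using spn by blast
  next
    fix b assume "b \<in> vv x ` J"
    then obtain j where j: "j \<in> J" "b = vv x j" by blast
    have jr: "j \<in> {1..r}" using j nr unfolding J_def by auto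
    show "k b = m 1 *\<^sub>R b" using m jr meq[OF jr 1] j(2) by simp
  qed
  then show ?thesis by blast
qed

lemma det_fix:
  fixes g :: "real^'n \<Rightarrow> real^'n"
  assumes lg: "linear g" and dg: "det (matrix g) \<noteq> 0"
    and cond: "odd CARD('n) \<or> det (matrix g) > 0"
  shows "\<exists>M::real^'n^'n. det M = 1 \<and> (\<forall>S. subspace S \<longrightarrow> (\<lambda>v. M *v v) ` S = g ` S)"
proof -
  define c where "c = root CARD('n) (1 / det (matrix g))"
  have cn: "c ^ CARD('n) = 1 / det (matrix g)"
  proof (cases "odd CARD('n)")
    case True then show ?thesis unfolding c_def by (rule odd_real_root_pow)
  next
    case False then have "det (matrix g) > 0" using cond by simp
    then show ?thesis unfolding c_def by (intro real_root_pow_pos2) auto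
  qed
  have c0: "c \<noteq> 0" using cn dg by (metis divide_eq_0_iff one_neq_zero zero_power zero_less_card_finite)
  define M where "M = matrix ((\<lambda>v. c *\<^sub>R v) \<circ> g)"
  have lcg: "linear ((\<lambda>v. c *\<^sub>R v) \<circ> g)" using linear_compose[OF lg linear_scaleR] .
  have "det M = c ^ CARD('n) * det (matrix g)"
    unfolding M_def matrix_compose[OF lg linear_scaleR] det_mul det_scale_map ..
  then have dM: "det M = 1" using cn dg by simp
  have Mv: "M *v v = c *\<^sub>R g v" for v unfolding M_def using mat_works[OF lcg] by simp
  have "(\<lambda>v. M *v v) ` S = g ` S" if S: "subspace S" for S
  proof
    show "(\<lambda>v. M *v v) ` S \<subseteq> g ` S"
    proof
      fix y assume "y \<in> (\<lambda>v. M *v v) ` S"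
      then obtain v where v: "v \<in> S" "y = c *\<^sub>R g v" using Mv by auto
      then have "y = g (c *\<^sub>R v)" using linear_scale[OF lg] by simp
      moreover have "c *\<^sub>R v \<in> S" using S v(1) subspace_scale by blast
      ultimately show "y \<in> g ` S" by blast
    qed
    show "g ` S \<subseteq> (\<lambda>v. M *v v) ` S"
    proof
      fix y assume "y \<in> g ` S"
      then obtain v where v: "v \<in> S" "y = g v" by blast
      have "y = M *v ((1 / c) *\<^sub>R v)" using Mv linear_scale[OF lg] v(2) c0 by simp
      moreover have "(1 / c) *\<^sub>R v \<in> S" using S v(1) subspace_scale by blast
      ultimately show "y \<in> (\<lambda>v. M *v v) ` S" by blast
    qed
  qed
  then show ?thesis using dM by blast
qed

lemma orbit_from_map:
  fixes g :: "real^'n \<Rightarrow> real^'n"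
  assumes lg: "linear g" and dg: "det (matrix g) \<noteq> 0"
    and cond: "odd CARD('n) \<or> det (matrix g) > 0"
    and ft: "flag_tuple r (x::'n::finite flagtuple)"
    and cf: "\<forall>i\<in>{1..r}. g ` fst x i = fst z i \<and> g ` snd x i = snd z i"
  shows "same_orbit r x z"
proof -
  obtain M :: "real^'n^'n" where M: "det M = 1" "\<forall>S. subspace S \<longrightarrow> (\<lambda>v. M *v v) ` S = g ` S"
    using det_fix[OF lg dg cond] by blast
  have "\<forall>i\<in>{1..r}. fst z i = (\<lambda>v. M *v v) ` fst x i \<and> snd z i = (\<lambda>v. M *v v) ` snd x i"
    using M(2) cf ft_L(1)[OF ft] ft_H(1)[OF ft] by metis
  then show ?thesis unfolding same_orbit_def using M(1) by blast
qed



lemma diagD: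
  fixes a :: "'n::finite"
  defines "D \<equiv> (\<chi> i j. if i = j then (if i = a then -1 else 1) else (0::real)) :: real^'n^'n"
  shows "D ** D = mat 1" "det D = -1"
proof -
  have "(D ** D) $ i $ j = (mat 1 :: real^'n^'n) $ i $ j" for i j
  proof -
    have "(D ** D) $ i $ j = (\<Sum>k\<in>UNIV. D $ i $ k * D $ k $ j)"
      unfolding matrix_matrix_mult_def by simp
    also have "\<dots> = (\<Sum>k\<in>UNIV. (if k = i then D $ i $ i * D $ i $ j else 0))"
      by (rule sum.cong) (auto simp: D_def)
    also have "\<dots> = D $ i $ i * D $ i $ j" by (simp add: sum.delta)
    also have "\<dots> = (mat 1 :: real^'n^'n) $ i $ j" unfolding D_def mat_def by auto
    finally show ?thesis .
  qed
  then show "D ** D = mat 1" by (simp add: vec_eq_iff)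
  have "det D = (\<Prod>i\<in>UNIV. D $ i $ i)" by (rule det_diagonal) (simp add: D_def)
  also have "\<dots> = (\<Prod>i\<in>UNIV. if i = a then -1 else 1)" unfolding D_def by simp
  also have "\<dots> = -1" by (simp add: prod.delta)
  finally show "det D = -1" .
qed

lemma part1:
  assumes n: "CARD('n) \<ge> 3" and r: "r \<ge> 3" and cond: "odd CARD('n) \<or> CARD('n) > r"
    and x: "(x::'n::finite flagtuple) \<in> U r" and z: "z \<in> U r" and th: "theta_eq r x z"
  shows "same_orbit r x z"
proof -
  have n2: "CARD('n) \<ge> 2" using n by simp
  obtain s t where st: "\<forall>i\<in>{1..r}. s i \<noteq> 0 \<and> t i \<noteq> 0"
    "\<forall>i\<in>{1..r}. \<forall>j\<in>{1..r}. ff z i (vv z j) = s i * ff x i (vv x j) * t j"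
    using theta_st[OF x z r n2 th] by blast
  show ?thesis
  proof (cases "CARD('n) > r")
    case True
    obtain g where g: "linear g" "inj g" "det (matrix g) = 1"
      "\<forall>i\<in>{1..r}. g ` snd x i = snd z i" "\<forall>j\<in>{1..r}. g ` fst x j = fst z j"
      using constr_big[OF x z True st] by blast
    show ?thesis by (rule orbit_from_map[OF g(1) _ _ U_ft[OF x]]) (use g in auto)
  next
    case False
    then have nr: "CARD('n) \<le> r" and odd: "odd CARD('n)" using cond by auto
    obtain g where g: "linear g" "inj g"
      "\<forall>i\<in>{1..r}. g ` snd x i = snd z i" "\<forall>j\<in>{1..r}. g ` fst x j = fst z j"
      using constr_small[OF x z nr st(1,2)] by blast
    have dg: "det (matrix g) \<noteq> 0" using det_nz_iff_inj[OF g(1)] g(2) by simp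
    show ?thesis by (rule orbit_from_map[OF g(1) dg _ U_ft[OF x]]) (use g odd in auto)
  qed
qed

lemma part2:
  assumes n: "CARD('n) \<ge> 3" and r: "r \<ge> 3" and nr: "CARD('n) \<le> r" and ev: "even CARD('n)"
    and x: "(x::'n::finite flagtuple) \<in> U r"
  shows "\<exists>y \<in> U r. theta_eq r x y \<and> \<not> same_orbit r x y \<and>
                  (\<forall>z \<in> U r. theta_eq r x z \<longrightarrow> same_orbit r x z \<or> same_orbit r y z)"
proof -
  have n2: "CARD('n) \<ge> 2" using n by simp
  have ftx: "flag_tuple r x" using U_ft[OF x] .
  define a :: 'n where "a = undefined"
  define D :: "real^'n^'n" where "D = (\<chi> i j. if i = j then (if i = a then -1 else 1) else (0::real))"
  have DD: "D ** D = mat 1" and dD: "det D = -1" unfolding D_def using diagD by auto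
  define hf where "hf = (\<lambda>v. D *v v)"
  have lh: "linear hf" unfolding hf_def by (rule matrix_vector_mul_linear)
  have hh: "hf (hf v) = v" for v unfolding hf_def by (simp add: matrix_vector_mul_assoc DD)
  have ih: "inj hf" by (metis hh injI)
  have mh: "matrix hf = D" unfolding hf_def by simp
  have hhS: "hf ` hf ` S = S" for S using hh by (auto simp: image_iff)
  define y where "y = actf hf x"
  have yU: "y \<in> U r" unfolding y_def using U_transport[OF lh ih x] n r by simp
  have fty: "flag_tuple r y" using U_ft[OF yU] .
  have thy: "theta_eq r x y" unfolding y_def using theta_transport[OF lh ih ftx] .
  have nso: "\<not> same_orbit r x y"
  proof
    assume "same_orbit r x y"
    then obtain g :: "real^'n^'n" where g: "det g = 1"
      "\<forall>i\<in>{1..r}. fst y i = (\<lambda>v. g *v v) ` fst x i \<and> snd y i = (\<lambda>v. g *v v) ` snd x i"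
      unfolding same_orbit_def by blast
    define k where "k = (\<lambda>v. (D ** g) *v v)"
    have lk: "linear k" unfolding k_def by (rule matrix_vector_mul_linear)
    have kS: "k ` S = hf ` ((\<lambda>v. g *v v) ` S)" for S
      unfolding k_def hf_def by (auto simp: image_iff matrix_vector_mul_assoc[symmetric])
    have sL: "\<forall>j\<in>{1..r}. k ` fst x j = fst x j"
      using g(2) hhS kS unfolding y_def by (metis actf_simps(1))
    have sH: "\<forall>i\<in>{1..r}. k ` snd x i = snd x i"
      using g(2) hhS kS unfolding y_def by (metis actf_simps(2))
    obtain \<mu> where mu: "\<forall>u. k u = \<mu> *\<^sub>R u" using stab_scalar[OF x r nr n2 lk sL sH] by blast
    have "k = (\<lambda>u. \<mu> *\<^sub>R u)" using mu by auto
    then have "det (matrix k) = \<mu> ^ CARD('n)" using det_scale_map by simp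
    moreover have "det (matrix k) = -1" unfolding k_def using dD g(1) by (simp add: det_mul)
    moreover have "\<mu> ^ CARD('n) \<ge> 0" using ev by (simp add: zero_le_even_power)
    ultimately show False by simp
  qed
  have "same_orbit r x z \<or> same_orbit r y z" if z: "z \<in> U r" and th: "theta_eq r x z" for z
  proof -
    obtain s t where st: "\<forall>i\<in>{1..r}. s i \<noteq> 0 \<and> t i \<noteq> 0"
      "\<forall>i\<in>{1..r}. \<forall>j\<in>{1..r}. ff z i (vv z j) = s i * ff x i (vv x j) * t j"
      using theta_st[OF x z r n2 th] by blast
    obtain g where g: "linear g" "inj g"
      "\<forall>i\<in>{1..r}. g ` snd x i = snd z i" "\<forall>j\<in>{1..r}. g ` fst x j = fst z j"
      using constr_small[OF x z nr st(1,2)] by blast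
    have dg: "det (matrix g) \<noteq> 0" using det_nz_iff_inj[OF g(1)] g(2) by simp
    show ?thesis
    proof (cases "det (matrix g) > 0")
      case True
      have "same_orbit r x z" by (rule orbit_from_map[OF g(1) dg _ ftx]) (use g True in auto)
      then show ?thesis by blast
    next
      case False
      define g2 where "g2 = g \<circ> hf"
      have l2: "linear g2" unfolding g2_def using linear_compose[OF lh g(1)] .
      have d2: "det (matrix g2) = - det (matrix g)"
        unfolding g2_def matrix_compose[OF lh g(1)] det_mul mh dD by simp
      then have d2p: "det (matrix g2) > 0" using False dg by simp
      have im: "g2 ` hf ` S = g ` S" for S unfolding g2_def image_comp[symmetric] hhS ..
      have "\<forall>i\<in>{1..r}. g2 ` fst y i = fst z i \<and> g2 ` snd y i = snd z i"
        using g(3,4) im unfolding y_def actf_simps by simp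
      then have "same_orbit r y z" using orbit_from_map[OF l2 _ _ fty] d2p by simp
      then show ?thesis by blast
    qed
  qed
  then show ?thesis using yU thy nso by blast
qed

theorem proposition4p11:
  fixes r :: nat
  assumes "CARD('n::finite) \<ge> 3" and "r \<ge> 3"
  shows "((odd CARD('n) \<or> CARD('n) > r) \<longrightarrow>
            (\<forall>x y :: 'n flagtuple. x \<in> U r \<and> y \<in> U r \<and> theta_eq r x y \<longrightarrow> same_orbit r x y))
       \<and> ((CARD('n) \<le> r \<and> even CARD('n)) \<longrightarrow>
            (\<forall>x :: 'n flagtuple. x \<in> U r \<longrightarrow>
               (\<exists>y \<in> U r. theta_eq r x y \<and> \<not> same_orbit r x y \<and>
                  (\<forall>z \<in> U r. theta_eq r x z \<longrightarrow> same_orbit r x z \<or> same_orbit r y z))))"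
  using part1[OF assms] part2[OF assms] by blast


end
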